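(* Let $\mathcal F$ be a filtration array, $E=(E_{m,n})_{m,n\in\mathbb N}$ a nonnegative process adapted to $\mathcal F$, and $G=(G_n)_{n\in\mathbb N}$ a process adapted to $\mathcal F_{\infty,\bullet}$. Assume that $E$ converges to $G$ in $L_1$ uniformly in $\mathcal P$. Then the following are equivalent: (i) there exists an extended integer sequence $r=(r_m)_{m\in\mathbb N}$ with $r_m\to\infty$ as $m\to\infty$ such that $E$ is an $r$-asymptotic e-process for $\mathcal P$ and $\mathcal F$; (ii) $G$ is an e-process for $\mathcal P$ with respect to $\mathcal F_{\infty,\bullet}$. Moreover, if these hold, then $E$ is an $r$-asymptotic e-process for every extended integer sequence $r$ satisfying $$\lim_{m\to\infty}\sum_{n=0}^{r_m}\sup_{P\in\mathcal P}\mathbb E_P[|E_{m,n}-G_n|]=0,$$ and there exists at least one such sequence with $r_m\to\infty$.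
   Context: $(\Omega,\mathcal A)$ is a measurable space and $\mathcal P$ a set of probability measures on it. $\mathbb N=\{0,1,\dots\}$; extended integers are elements of $\mathbb N\cup\{\infty\}$. Nonnegative random variables take values in $[0,\infty]$ with $\mathbb E_P[X]:=\infty$ if not $P$-integrable; $X_\infty:=\limsup_n X_n$ for a process. A filtration sequence is a family $(\mathcal F_{m,n})_{m,n\in\mathbb N}$ of sub-$\sigma$-algebras with each $\mathcal F_{m,\bullet}$ a filtration; it is a filtration array if moreover $\mathcal F_{m,n}\subset\mathcal F_{m+1,n}$ for all $m,n$. Then $\mathcal F_{\infty,n}:=\sigma(\bigcup_{m}\mathcal F_{m,n})$ and $\mathcal F_{\infty,\bullet}$ is a filtration. Adapted means $E_{m,n}$ is $\mathcal F_{m,n}$-measurable. For a filtration $\mathcal G$ and $\rho\in\mathbb N\cup\{\infty\}$, $\mathcal T(\rho,\mathcal G,\mathcal P)$ is the set of $\mathcal G$-stopping times $\tau$ (values in $\mathbb N\cup\{\infty\}$) with $P[\tau\le\rho]=1$ for all $P\in\mathcal P$; $\mathcal T(r,\mathcal F,\mathcal P)$ is the set of sequences $(\tau_m)$ with $\tau_m\in\mathcal T(r_m,\mathcal F_{m,\bullet},\mathcal P)$. $E$ is an $r$-asymptotic e-process if for every $\tau\in\mathcal T(r,\mathcal F,\mathcal P)$, $\limsup_{m}\sup_{P\in\mathcal P}\mathbb E_P[E_{m,\tau_m}]\le 1$. An e-process for $\mathcal P$ w.r.t. a filtration $\mathcal G$ is a nonnegative $\mathcal G$-adapted process $(G_n)$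 with $\mathbb E_P[G_\tau]\le 1$ for every $\mathcal G$-stopping time $\tau$ and every $P\in\mathcal P$. $E$ converges to $G$ in $L_1$ uniformly in $\mathcal P$ if all $E_{m,n}$ and $G_n$ are $P$-integrable for all $P\in\mathcal P$ and $\lim_{m\to\infty}\sup_{P\in\mathcal P}\mathbb E_P[|E_{m,n}-G_n|]=0$ for every $n$. *)

theory Defs
  imports "HOL-Probability.Probability"
begin

definition sub_sigma :: "'a measure \<Rightarrow> 'a measure \<Rightarrow> bool" where
  "sub_sigma M N \<longleftrightarrow> space N = space M \<and> sets N \<subseteq> sets M"

definition filtration :: "'a measure \<Rightarrow> (nat \<Rightarrow> 'a measure) \<Rightarrow> bool" where
  "filtration M G \<longleftrightarrow> (\<forall>n. sub_sigma M (G n)) \<and> (\<forall>n. sets (G n) \<subseteq> sets (G (Suc n)))"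

definition filtration_sequence :: "'a measure \<Rightarrow> (nat \<Rightarrow> nat \<Rightarrow> 'a measure) \<Rightarrow> bool" where
  "filtration_sequence M F \<longleftrightarrow> (\<forall>m. filtration M (F m))"

definition filtration_array :: "'a measure \<Rightarrow> (nat \<Rightarrow> nat \<Rightarrow> 'a measure) \<Rightarrow> bool" where
  "filtration_array M F \<longleftrightarrow> filtration_sequence M F \<and>
     (\<forall>m n. sets (F m n) \<subseteq> sets (F (Suc m) n))"

definition F_inf :: "'a measure \<Rightarrow> (nat \<Rightarrow> nat \<Rightarrow> 'a measure) \<Rightarrow> nat \<Rightarrow> 'a measure" where
  "F_inf M F n = sigma (space M) (\<Union>m. sets (F m n))"

definition stopping_time :: "(nat \<Rightarrow> 'a measure) \<Rightarrow> ('a \<Rightarrow> enat) \<Rightarrow> bool" where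
  "stopping_time G \<tau> \<longleftrightarrow> (\<forall>n. {\<omega> \<in> space (G n). \<tau> \<omega> \<le> enat n} \<in> sets (G n))"

definition bounded_stopping_times ::
    "enat \<Rightarrow> (nat \<Rightarrow> 'a measure) \<Rightarrow> 'a measure set \<Rightarrow> ('a \<Rightarrow> enat) set" where
  "bounded_stopping_times \<rho> G Ps =
     {\<tau>. stopping_time G \<tau> \<and> (\<forall>P\<in>Ps. emeasure P {\<omega> \<in> space P. \<tau> \<omega> \<le> \<rho>} = 1)}"

definition stopped :: "(nat \<Rightarrow> 'a \<Rightarrow> ennreal) \<Rightarrow> ('a \<Rightarrow> enat) \<Rightarrow> 'a \<Rightarrow> ennreal" where
  "stopped X \<tau> \<omega> = (case \<tau> \<omega> of enat n \<Rightarrow> X n \<omega> | \<infinity> \<Rightarrow> limsup (\<lambda>n. X n \<omega>))"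

text \<open>r-asymptotic e-process (expectations of [0,\<infinity>]-valued variables are nonnegative integrals,
  which equal \<infinity> for non-integrable variables).\<close>
definition asymptotic_eprocess ::
    "'a measure set \<Rightarrow> (nat \<Rightarrow> nat \<Rightarrow> 'a measure) \<Rightarrow> (nat \<Rightarrow> enat) \<Rightarrow> (nat \<Rightarrow> nat \<Rightarrow> 'a \<Rightarrow> ennreal) \<Rightarrow> bool" where
  "asymptotic_eprocess Ps F r E \<longleftrightarrow>
     (\<forall>\<tau>. (\<forall>m. \<tau> m \<in> bounded_stopping_times (r m) (F m) Ps) \<longrightarrow>
        limsup (\<lambda>m. SUP P\<in>Ps. \<integral>\<^sup>+ \<omega>. stopped (E m) (\<tau> m) \<omega> \<partial>P) \<le> 1)"

definition eprocess ::
    "'a measure set \<Rightarrow> (nat \<Rightarrow> 'a measure) \<Rightarrow> (nat \<Rightarrow> 'a \<Rightarrow> ennreal) \<Rightarrow> bool" where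
  "eprocess Ps G X \<longleftrightarrow> (\<forall>n. X n \<in> borel_measurable (G n)) \<and>
     (\<forall>\<tau>. stopping_time G \<tau> \<longrightarrow> (\<forall>P\<in>Ps. (\<integral>\<^sup>+ \<omega>. stopped X \<tau> \<omega> \<partial>P) \<le> 1))"

definition P_integrable :: "'a measure \<Rightarrow> ('a \<Rightarrow> ennreal) \<Rightarrow> bool" where
  "P_integrable P X \<longleftrightarrow> X \<in> borel_measurable P \<and> (\<integral>\<^sup>+ \<omega>. X \<omega> \<partial>P) < \<infinity>"

text \<open>|x - y| for [0,\<infinity>]-values (exact whenever one of them is finite).\<close>
definition absdiff :: "ennreal \<Rightarrow> ennreal \<Rightarrow> ennreal" where
  "absdiff x y = (x - y) + (y - x)"

definition L1_dist_sup :: "'a measure set \<Rightarrow> ('a \<Rightarrow> ennreal) \<Rightarrow> ('a \<Rightarrow> ennreal) \<Rightarrow> ennreal" where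
  "L1_dist_sup Ps X Y = (SUP P\<in>Ps. \<integral>\<^sup>+ \<omega>. absdiff (X \<omega>) (Y \<omega>) \<partial>P)"

definition L1_unif_conv ::
    "'a measure set \<Rightarrow> (nat \<Rightarrow> nat \<Rightarrow> 'a \<Rightarrow> ennreal) \<Rightarrow> (nat \<Rightarrow> 'a \<Rightarrow> ennreal) \<Rightarrow> bool" where
  "L1_unif_conv Ps E G \<longleftrightarrow>
     (\<forall>P\<in>Ps. (\<forall>m n. P_integrable P (E m n)) \<and> (\<forall>n. P_integrable P (G n))) \<and>
     (\<forall>n. (\<lambda>m. L1_dist_sup Ps (E m n) (G n)) \<longlonglongrightarrow> 0)"

definition tends_to_infinity :: "(nat \<Rightarrow> enat) \<Rightarrow> bool" where
  "tends_to_infinity r \<longleftrightarrow> (\<forall>K::nat. eventually (\<lambda>m. enat K \<le> r m) sequentially)"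

text \<open>lim_m sum_{n=0}^{r_m} sup_P E_P|E_{m,n} - G_n| = 0 (the sum is infinite if r_m = \<infinity>).\<close>
definition sum_condition ::
    "'a measure set \<Rightarrow> (nat \<Rightarrow> nat \<Rightarrow> 'a \<Rightarrow> ennreal) \<Rightarrow> (nat \<Rightarrow> 'a \<Rightarrow> ennreal) \<Rightarrow> (nat \<Rightarrow> enat) \<Rightarrow> bool" where
  "sum_condition Ps E G r \<longleftrightarrow>
     (\<lambda>m. \<Sum>n. (if enat n \<le> r m then L1_dist_sup Ps (E m n) (G n) else 0)) \<longlonglongrightarrow> 0"

end

theory Submission
  imports Defs
begin


lemma stopping_pre_meas:
  assumes "\<forall>n. {\<omega>\<in>space N. \<tau> \<omega> \<le> enat n} \<in> sets N"
  shows "\<tau> \<in> measurable N (count_space UNIV)"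
proof -
  have A: "\<tau> -` {enat n} \<inter> space N \<in> sets N" for n
  proof (cases n)
    case 0
    have "\<tau> -` {enat n} \<inter> space N = {\<omega>\<in>space N. \<tau> \<omega> \<le> enat 0}" using 0 by (auto simp: enat_0 )
    then show ?thesis using assms by simp
  next
    case (Suc k)
    have "\<tau> -` {enat n} \<inter> space N = {\<omega>\<in>space N. \<tau> \<omega> \<le> enat n} - {\<omega>\<in>space N. \<tau> \<omega> \<le> enat k}"
    proof (intro set_eqI iffI)
      fix \<omega> assume "\<omega> \<in> \<tau> -` {enat n} \<inter> space N" then show "\<omega> \<in> {\<omega>\<in>space N. \<tau> \<omega> \<le> enat n} - {\<omega>\<in>space N. \<tau> \<omega> \<le> enat k}"
        using Suc by auto
    next
      fix \<omega> assume "\<omega> \<in> {\<omega>\<in>space N. \<tau> \<omega> \<le> enat n} - {\<omega>\<in>space N. \<tau> \<omega> \<le> enat k}"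
      then show "\<omega> \<in> \<tau> -` {enat n} \<inter> space N" using Suc by (cases "\<tau> \<omega>") auto
    qed
    then show ?thesis using assms by auto
  qed
  have B: "\<tau> -` {\<infinity>} \<inter> space N = space N - (\<Union>n. {\<omega>\<in>space N. \<tau> \<omega> \<le> enat n})"
    apply auto subgoal for x by (cases "\<tau> x") auto done
  have "\<tau> -` {\<infinity>} \<inter> space N \<in> sets N" unfolding B using assms by auto
  then show ?thesis unfolding measurable_count_space_eq2_countable
    using A by (auto intro: enat.exhaust) (metis A enat.exhaust)
qed

lemma stopped_measurable:
  assumes "\<forall>n. {\<omega>\<in>space N. \<tau> \<omega> \<le> enat n} \<in> sets N" "\<forall>n. X n \<in> borel_measurable N"
  shows "stopped X \<tau> \<in> borel_measurable N"
proof -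
  have eq: "stopped X \<tau> = (\<lambda>\<omega>. (\<lambda>e \<omega>. case e of enat n \<Rightarrow> X n \<omega> | \<infinity> \<Rightarrow> limsup (\<lambda>n. X n \<omega>)) (\<tau> \<omega>) \<omega>)"
    by (auto simp: stopped_def fun_eq_iff)
  show ?thesis unfolding eq
  proof (rule measurable_compose_countable[OF _ stopping_pre_meas[OF assms(1)]])
    fix e :: enat
    show "(\<lambda>x. case e of enat n \<Rightarrow> X n x | \<infinity> \<Rightarrow> limsup (\<lambda>n. X n x)) \<in> borel_measurable N"
      using assms(2) by (cases e) (auto intro: borel_measurable_limsup)
  qed
qed



definition sdiff :: "'a set \<Rightarrow> 'a set \<Rightarrow> 'a set" where
  "sdiff A B = (A - B) \<union> (B - A)"

lemma approx_finite:
  fixes Q :: "'a measure" and \<A> :: "'i \<Rightarrow> nat \<Rightarrow> 'a set set"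
  assumes "finite I"
    and mono: "\<forall>i k. \<A> i k \<subseteq> \<A> i (Suc k)"
    and sub: "\<forall>i k. \<A> i k \<subseteq> sets Q"
    and Asets: "\<forall>i\<in>I. A i \<in> sets Q"
    and ap: "\<forall>i\<in>I. \<forall>\<eta>>0. \<exists>k. \<exists>B\<in>\<A> i k. measure Q (sdiff (A i) B) < \<eta>"
    and "\<eta> > 0"
  shows "\<exists>k B. (\<forall>i\<in>I. B i \<in> \<A> i k) \<and> measure Q (\<Union>i\<in>I. sdiff (A i) (B i)) < \<eta>"
  using assms(1) Asets ap \<open>\<eta> > 0\<close>
proof (induction I arbitrary: \<eta> rule: finite_induct)
  case empty
  then show ?case by auto
next
  case (insert j I)
  have h2: "\<eta>/2 > 0" using insert by simp
  obtain k1 B1 where k1: "\<forall>i\<in>I. B1 i \<in> \<A> i k1" "measure Q (\<Union>i\<in>I. sdiff (A i) (B1 i)) < \<eta>/2"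
    using insert.IH[OF _ _ h2] insert.prems by auto
  obtain k2 b where k2: "b \<in> \<A> j k2" "measure Q (sdiff (A j) b) < \<eta>/2"
    using insert.prems h2 by blast
  define k where "k = max k1 k2"
  define B where "B = B1(j := b)"
  have monok: "\<And>i a c. a \<le> c \<Longrightarrow> \<A> i a \<subseteq> \<A> i c"
    using mono by (meson lift_Suc_mono_le)
  have bk: "b \<in> \<A> j k" using k2(1) monok[of k2 k j] unfolding k_def by auto
  have "\<forall>i\<in>I. B1 i \<in> \<A> i k" using k1(1) monok[of k1 k] unfolding k_def by auto
  then have "\<forall>i\<in>insert j I. B i \<in> \<A> i k"
    using bk unfolding B_def by auto
  moreover have "measure Q (\<Union>i\<in>insert j I. sdiff (A i) (B i)) < \<eta>"
  proof -
    have Bs: "\<forall>i\<in>insert j I. B i \<in> sets Q" using \<open>\<forall>i\<in>insert j I. B i \<in> \<A> i k\<close> sub by blast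
    have "(\<Union>i\<in>I. sdiff (A i) (B i)) = (\<Union>i\<in>I. sdiff (A i) (B1 i))"
      using insert.hyps(2) unfolding B_def by (intro SUP_cong) auto
    then have e: "(\<Union>i\<in>insert j I. sdiff (A i) (B i)) = sdiff (A j) b \<union> (\<Union>i\<in>I. sdiff (A i) (B1 i))"
      by (simp add: B_def)
    have bQ: "b \<in> sets Q" using k2(1) sub by blast
    have s1: "sdiff (A j) b \<in> sets Q" unfolding sdiff_def using insert.prems(1) bQ by auto
    have "sdiff (A i) (B1 i) \<in> sets Q" if "i \<in> I" for i
    proof -
      have "B1 i \<in> sets Q" using k1(1) sub that by blast
      moreover have "A i \<in> sets Q" using insert.prems(1) that by auto
      ultimately show ?thesis by (auto simp: sdiff_def)
    qed
    then have s2: "(\<Union>i\<in>I. sdiff (A i) (B1 i)) \<in> sets Q"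
      using insert.hyps(1) by (intro sets.finite_UN) auto
    show ?thesis unfolding e using measure_Un_le[OF s1 s2] k1(2) k2(2) by linarith
  qed
  ultimately show ?case by (intro exI[of _ k] exI[of _ B]) simp
qed

lemma approx_sigma:
  fixes Q :: "'a measure" and \<A> :: "nat \<Rightarrow> 'a set set"
  assumes fin: "finite_measure Q"
    and alg: "\<forall>k. sigma_algebra (space Q) (\<A> k)"
    and mono: "\<forall>k. \<A> k \<subseteq> \<A> (Suc k)"
    and sub: "\<forall>k. \<A> k \<subseteq> sets Q"
    and A: "A \<in> sigma_sets (space Q) (\<Union>k. \<A> k)"
  shows "\<forall>\<eta>>0. \<exists>k. \<exists>B\<in>\<A> k. measure Q (sdiff A B) < \<eta>"
  using A
proof (induction rule: sigma_sets.induct)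
  case (Basic a)
  then obtain k where "a \<in> \<A> k" by auto
  then show ?case by (intro allI impI exI[of _ k] bexI[of _ a]) (auto simp: sdiff_def)
next
  case Empty
  interpret sigma_algebra "space Q" "\<A> 0" using alg by blast
  have "{} \<in> \<A> 0" by simp
  then show ?case by (intro allI impI exI[of _ 0] bexI[of _ "{}"]) (auto simp: sdiff_def)
next
  case (Compl a)
  have asub: "a \<subseteq> space Q"
  proof (rule sigma_sets_into_sp[OF _ Compl.hyps])
    show "(\<Union>k. \<A> k) \<subseteq> Pow (space Q)" using sub sets.sets_into_space by blast
  qed
  show ?case
  proof (intro allI impI)
    fix \<eta> :: real assume "\<eta> > 0"
    then obtain k B where B: "B \<in> \<A> k" "measure Q (sdiff a B) < \<eta>" using Compl.IH by blast
    interpret sigma_algebra "space Q" "\<A> k" using alg by blast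
    have "space Q - B \<in> \<A> k" using B(1) by (rule compl_sets)
    moreover have "B \<subseteq> space Q" using B(1) sets_into_space by simp
    then have "sdiff (space Q - a) (space Q - B) = sdiff a B"
      using asub unfolding sdiff_def by blast
    ultimately show "\<exists>k. \<exists>B\<in>\<A> k. measure Q (sdiff (space Q - a) B) < \<eta>" using B(2)
      by (intro exI[of _ k] bexI[of _ "space Q - B"]) simp_all
  qed
next
  case (Union a)
  interpret finite_measure Q by (rule fin)
  have gen: "(\<Union>k. \<A> k) \<subseteq> sets Q" using sub by blast
  have asets: "\<And>i. a i \<in> sets Q" by (rule subsetD[OF sets.sigma_sets_subset[OF gen] Union.hyps])
  show ?case
  proof (intro allI impI)
    fix \<eta> :: real assume eta: "\<eta> > 0"
    define U where "U n = (\<Union>i\<in>{..<n}. a i)" for n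
    have "U n \<in> sets Q" for n unfolding U_def using asets by (intro sets.finite_UN) auto
    then have Us: "range U \<subseteq> sets Q" by blast
    have incU: "incseq U" unfolding U_def incseq_def by (intro allI impI SUP_subset_mono) auto
    have UU: "(\<Union>n. U n) = (\<Union>i. a i)" unfolding U_def by auto
    have "(\<lambda>n. measure Q (U n)) \<longlonglongrightarrow> measure Q (\<Union>i. a i)"
      using finite_Lim_measure_incseq[OF Us incU] UU by simp
    from LIMSEQ_D[OF this, of "\<eta>/2"] obtain n0 where
      "\<forall>n\<ge>n0. norm (measure Q (U n) - measure Q (\<Union>i. a i)) < \<eta>/2" using eta by auto
    then have n: "\<bar>measure Q (U n0) - measure Q (\<Union>i. a i)\<bar> < \<eta>/2" by auto
    define n where "n = n0"
    have ih: "\<forall>i\<in>{..<n}. \<forall>\<eta>>0. \<exists>k. \<exists>B\<in>\<A> k. measure Q (sdiff (a i) B) < \<eta>" using Union.IH by blast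
    have mono': "\<forall>(i::nat) k. \<A> k \<subseteq> \<A> (Suc k)" using mono by blast
    have sub': "\<forall>(i::nat) k. \<A> k \<subseteq> sets Q" using sub by blast
    have as': "\<forall>i\<in>{..<n}. a i \<in> sets Q" using asets by blast
    have "\<eta>/2 > 0" using eta by simp
    from approx_finite[of "{..<n}" "\<lambda>_. \<A>" Q a "\<eta>/2", OF finite_lessThan mono' sub' as' ih this]
    obtain k B where kB: "\<forall>i\<in>{..<n}. B i \<in> \<A> k" "measure Q (\<Union>i\<in>{..<n}. sdiff (a i) (B i)) < \<eta>/2"
      by blast
    have Bk: "(\<Union>i\<in>{..<n}. B i) \<in> \<A> k"
      proof -
      interpret sigma_algebra "space Q" "\<A> k" using alg by blast
      show ?thesis using kB(1) by (intro finite_UN) auto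
    qed
    have sub1: "sdiff (\<Union>i. a i) (\<Union>i\<in>{..<n}. B i) \<subseteq> ((\<Union>i. a i) - U n) \<union> (\<Union>i\<in>{..<n}. sdiff (a i) (B i))"
      unfolding sdiff_def U_def by blast
    have s1: "(\<Union>i. a i) - U n \<in> sets Q" using asets Us by auto
    have "sdiff (a i) (B i) \<in> sets Q" if "i \<in> {..<n}" for i
    proof -
      have "B i \<in> sets Q" using kB(1) sub that by blast
      then show ?thesis using asets by (auto simp: sdiff_def)
    qed
    then have s2: "(\<Union>i\<in>{..<n}. sdiff (a i) (B i)) \<in> sets Q" by (intro sets.finite_UN) auto
    have m1: "measure Q ((\<Union>i. a i) - U n) = measure Q (\<Union>i. a i) - measure Q (U n)"
      by (rule finite_measure_Diff) (use asets Us UU in auto)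
    have "measure Q (sdiff (\<Union>i. a i) (\<Union>i\<in>{..<n}. B i)) \<le> measure Q (((\<Union>i. a i) - U n) \<union> (\<Union>i\<in>{..<n}. sdiff (a i) (B i)))"
      by (rule finite_measure_mono[OF sub1]) (use s1 s2 in auto)
    also have "\<dots> \<le> measure Q ((\<Union>i. a i) - U n) + measure Q (\<Union>i\<in>{..<n}. sdiff (a i) (B i))"
      by (rule measure_Un_le[OF s1 s2])
    also have "\<dots> < \<eta>" using m1 n kB(2) unfolding n_def by linarith
    finally show "\<exists>k. \<exists>B\<in>\<A> k. measure Q (sdiff (\<Union>i. a i) B) < \<eta>" using Bk by blast
  qed
qed


lemma ennreal_not_add_le: "(x::ennreal) < top \<Longrightarrow> d > 0 \<Longrightarrow> \<not> x + ennreal d \<le> x"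
proof
  assume "x < top" "d > 0" "x + ennreal d \<le> x"
  then have "x + ennreal d \<le> x + 0" by simp
  then have "x = top \<or> ennreal d \<le> 0" using ennreal_add_left_cancel_le by (metis infinity_ennreal_def)
  then show False using \<open>x < top\<close> \<open>d > 0\<close> by auto
qed

lemma ennreal_l1: "(x::ennreal) \<le> a + (b + x)"
  by (simp add: add_increasing)
lemma ennreal_l2: "(g::ennreal) \<le> (g - d) + d"
  unfolding diff_add_self_ennreal by auto

lemma stage2_key:
  fixes P :: "'a measure" and \<G> :: "nat \<Rightarrow> 'a measure" and X :: "nat \<Rightarrow> 'a \<Rightarrow> ennreal"
    and \<tau> :: "'a \<Rightarrow> enat" and g :: "'a \<Rightarrow> ennreal"
  assumes prob: "prob_space P"
    and sp: "\<forall>n. space (\<G> n) = space P"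
    and mono: "\<forall>n. sets (\<G> n) \<subseteq> sets (\<G> (Suc n))"
    and sub: "\<forall>n. sets (\<G> n) \<subseteq> sets P"
    and Xm: "\<forall>n. X n \<in> borel_measurable (\<G> n)"
    and bnd: "\<forall>\<sigma> K. stopping_time \<G> \<sigma> \<longrightarrow> (\<forall>\<omega>\<in>space P. \<sigma> \<omega> \<le> enat K) \<longrightarrow> (\<integral>\<^sup>+\<omega>. stopped X \<sigma> \<omega> \<partial>P) \<le> 1"
    and tau: "stopping_time \<G> \<tau>"
    and gsim: "simple_function (sigma (space P) (\<Union>n. sets (\<G> n))) g"
    and gle: "\<forall>\<omega>\<in>space P. g \<omega> \<le> stopped X \<tau> \<omega>"
    and gfin: "\<forall>\<omega>. g \<omega> < top"
  shows "(\<integral>\<^sup>+\<omega>. g \<omega> \<partial>P) \<le> 1"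
proof -
  interpret prob_space P by (rule prob)
  define \<Omega> where "\<Omega> = space P"
  define Minf where "Minf = sigma \<Omega> (\<Union>n. sets (\<G> n))"
  have gen: "(\<Union>n. sets (\<G> n)) \<subseteq> sets P" using sub by blast
  have genP: "(\<Union>n. sets (\<G> n)) \<subseteq> Pow \<Omega>" using gen sets.sets_into_space unfolding \<Omega>_def by blast
  have sM: "sets Minf = sigma_sets \<Omega> (\<Union>n. sets (\<G> n))" using genP by (simp add: Minf_def)
  have spM: "space Minf = \<Omega>" using genP by (simp add: Minf_def)
  have subalg: "subalgebra P Minf"
    unfolding subalgebra_def using spM sM sets.sigma_sets_subset[OF gen] \<Omega>_def by simp
  have subalgG: "subalgebra P (\<G> n)" for n unfolding subalgebra_def using sp sub by auto
  have XmP[measurable]: "X n \<in> borel_measurable P" for n using measurable_from_subalg[OF subalgG] Xm by blast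
  have gsim': "simple_function Minf g" using gsim unfolding Minf_def \<Omega>_def .
  have gmP[measurable]: "g \<in> borel_measurable P"
    using measurable_from_subalg[OF subalg borel_measurable_simple_function[OF gsim']] .
  have ms: "\<And>n. sets (\<G> n) \<subseteq> sets (\<G> (Suc n))" using mono by blast
  have monoN: "sets (\<G> a) \<subseteq> sets (\<G> b)" if "a \<le> b" for a b
    using lift_Suc_mono_le[of "\<lambda>n. sets (\<G> n)", OF ms that] .
  define V where "V = g ` \<Omega>"
  have finV: "finite V" using simple_functionD(1)[OF gsim'] spM unfolding V_def by simp
  define A where "A c = g -` {c} \<inter> \<Omega>" for c
  have AM: "A c \<in> sigma_sets \<Omega> (\<Union>n. sets (\<G> n))" for c
    using simple_functionD(2)[OF gsim', of "{c}"] spM sM unfolding A_def by simp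
  have AP: "A c \<in> sets P" for c using AM sets.sigma_sets_subset[OF gen] unfolding \<Omega>_def by blast
  have finP: "finite_measure P" by (rule finite_measure_axioms)
  have algG: "\<forall>k. sigma_algebra (space P) (sets (\<G> k))"
    using sets.sigma_algebra_axioms sp by metis
  have apx: "\<forall>\<eta>>0. \<exists>k. \<exists>B\<in>sets (\<G> k). measure P (sdiff (A c) B) < \<eta>" for c
    by (rule approx_sigma[OF finP algG mono sub]) (use AM \<Omega>_def in simp)
  have nonempty: "\<Omega> \<noteq> {}" using emeasure_space_1 unfolding \<Omega>_def by auto
  have Vne: "V \<noteq> {}" using nonempty unfolding V_def by auto
  define C where "C = Max V"
  have gC: "g \<omega> \<le> C" if "\<omega> \<in> \<Omega>" for \<omega> unfolding C_def V_def using finV that V_def by auto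
  have Cfin: "C < top" unfolding C_def using Max_in[OF finV Vne] gfin V_def by auto
  define c0 where "c0 = enn2real C"
  have Cc0: "C = ennreal c0" "c0 \<ge> 0" using Cfin unfolding c0_def by (auto simp: less_top)
  show ?thesis
  proof (rule ennreal_le_epsilon)
    fix e :: real assume "0 < e"
    define \<delta> where "\<delta> = e / 2"
    define \<eta> where "\<eta> = e / (4 * (c0 + 1))"
    have \<delta>pos: "\<delta> > 0" and \<eta>pos: "\<eta> > 0" using \<open>0 < e\<close> Cc0 unfolding \<delta>_def \<eta>_def by auto
    have apxV: "\<forall>c\<in>V. \<forall>\<eta>>0. \<exists>k. \<exists>B\<in>sets (\<G> k). measure P (sdiff (A c) B) < \<eta>" using apx by blast
    have monoG: "\<forall>(c::ennreal) k. sets (\<G> k) \<subseteq> sets (\<G> (Suc k))" using mono by blast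
    have subG: "\<forall>(c::ennreal) k. sets (\<G> k) \<subseteq> sets P" using sub by blast
    have APV: "\<forall>c\<in>V. A c \<in> sets P" using AP by blast
    from approx_finite[of V "\<lambda>_ k. sets (\<G> k)" P A \<eta>, OF finV monoG subG APV apxV \<eta>pos]
    obtain N B where NB: "\<forall>c\<in>V. B c \<in> sets (\<G> N)" "measure P (\<Union>c\<in>V. sdiff (A c) (B c)) < \<eta>"
      by blast
    define Bad1 where "Bad1 = (\<Union>c\<in>V. sdiff (A c) (B c))"
    have BP: "B c \<in> sets P" if "c \<in> V" for c using NB(1) sub that by blast
    have B\<Omega>: "B c \<subseteq> \<Omega>" if "c \<in> V" for c using BP[OF that] sets.sets_into_space \<Omega>_def by blast
    have Bad1P: "Bad1 \<in> sets P"
    proof -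
      have "sdiff (A c) (B c) \<in> sets P" if "c \<in> V" for c using AP BP[OF that] by (auto simp: sdiff_def)
      then show ?thesis unfolding Bad1_def using finV by (intro sets.finite_UN) auto
    qed
    define D where "D n = {\<omega>\<in>\<Omega>. (\<forall>k\<in>{N..n}. X k \<omega> < g \<omega> - ennreal \<delta>) \<and> enat n < \<tau> \<omega>}" for n
    have tauP: "{\<omega>\<in>\<Omega>. \<tau> \<omega> \<le> enat n} \<in> sets P" for n
    proof -
      have 1: "{\<omega>\<in>space (\<G> n). \<tau> \<omega> \<le> enat n} \<in> sets (\<G> n)" using tau unfolding stopping_time_def by simp
      have "space (\<G> n) = \<Omega>" using sp \<Omega>_def by simp
      then show ?thesis using subsetD[OF sub[rule_format] 1] by simp
    qed
    have DP: "D n \<in> sets P" for n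
    proof -
      have a1: "D n = {\<omega>\<in>\<Omega>. \<forall>k\<in>{N..n}. X k \<omega> < g \<omega> - ennreal \<delta>} \<inter> (\<Omega> - {\<omega>\<in>\<Omega>. \<tau> \<omega> \<le> enat n})"
        unfolding D_def by auto
      have a2: "{\<omega>\<in>\<Omega>. \<forall>k\<in>{N..n}. X k \<omega> < g \<omega> - ennreal \<delta>} \<in> sets P"
      proof (cases "N \<le> n")
        case True
        have e: "{\<omega>\<in>\<Omega>. \<forall>k\<in>{N..n}. X k \<omega> < g \<omega> - ennreal \<delta>} = (\<Inter>k\<in>{N..n}. {\<omega>\<in>space P. X k \<omega> < g \<omega> - ennreal \<delta>})"
          using True unfolding \<Omega>_def by auto
        have "{\<omega>\<in>space P. X k \<omega> < g \<omega> - ennreal \<delta>} \<in> sets P" for k by measurable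
        then show ?thesis unfolding e using True by (intro sets.finite_INT) auto
      next
        case False
        then have "{\<omega>\<in>\<Omega>. \<forall>k\<in>{N..n}. X k \<omega> < g \<omega> - ennreal \<delta>} = space P" unfolding \<Omega>_def by auto
        then show ?thesis by simp
      qed
      have a3: "\<Omega> - {\<omega>\<in>\<Omega>. \<tau> \<omega> \<le> enat n} \<in> sets P" using tauP[of n] unfolding \<Omega>_def by (rule sets.compl_sets)
      show ?thesis unfolding a1 by (rule sets.Int[OF a2 a3])
    qed
    have decD: "decseq D" unfolding decseq_def D_def
      by (auto simp: less_le_trans) (meson enat_ord_simps(1) le_less_trans)
    have interD: "(\<Inter>n. D n) = {}"
    proof (rule ccontr)
      assume "(\<Inter>n. D n) \<noteq> {}"
      then obtain \<omega> where w: "\<And>n. \<omega> \<in> D n" by blast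
      have w\<Omega>: "\<omega> \<in> \<Omega>" using w[of 0] unfolding D_def by auto
      have tinf: "\<tau> \<omega> = \<infinity>"
      proof (cases "\<tau> \<omega>")
        case (enat j) then show ?thesis using w[of j] unfolding D_def by auto
      qed simp
      have lt: "X k \<omega> < g \<omega> - ennreal \<delta>" if "N \<le> k" for k using w[of k] that unfolding D_def by auto
      have "limsup (\<lambda>n. X n \<omega>) \<le> (SUP m\<in>{N..}. X m \<omega>)"
        unfolding limsup_INF_SUP by (rule INF_lower) simp
      also have "\<dots> \<le> g \<omega> - ennreal \<delta>" using lt by (intro SUP_least) (auto intro: less_imp_le)
      finally have ls: "limsup (\<lambda>n. X n \<omega>) \<le> g \<omega> - ennreal \<delta>" .
      have "g \<omega> \<le> stopped X \<tau> \<omega>" using gle w\<Omega> unfolding \<Omega>_def by blast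
      then have "g \<omega> \<le> limsup (\<lambda>n. X n \<omega>)" using tinf unfolding stopped_def by simp
      then have "g \<omega> \<le> g \<omega> - ennreal \<delta>" using ls by (rule order_trans)
      then have "g \<omega> + ennreal \<delta> \<le> g \<omega> \<or> g \<omega> = 0" by (subst (asm) ennreal_le_minus_iff) auto
      moreover have "\<not> g \<omega> + ennreal \<delta> \<le> g \<omega>"
        by (rule ennreal_not_add_le) (use gfin \<delta>pos in auto)
      moreover have "g \<omega> \<noteq> 0" using lt[of N] by auto
      ultimately show False by blast
    qed
    have "(\<lambda>n. measure P (D n)) \<longlonglongrightarrow> measure P (\<Inter>n. D n)"
      using DP decD by (intro finite_Lim_measure_decseq) auto
    then have "(\<lambda>n. measure P (D n)) \<longlonglongrightarrow> 0" using interD by simp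
    from LIMSEQ_D[OF this \<eta>pos] obtain n0 where n0: "\<forall>n\<ge>n0. measure P (D n) < \<eta>" by auto
    define N' where "N' = max N n0"
    have DN': "measure P (D N') < \<eta>" using n0 unfolding N'_def by auto
    have NN': "N \<le> N'" unfolding N'_def by simp
    define Q2 where "Q2 k \<omega> \<longleftrightarrow> (\<exists>c\<in>V. \<omega> \<in> B c \<and> c - ennreal \<delta> \<le> X k \<omega>)" for k \<omega>
    define Qp where "Qp k \<omega> \<longleftrightarrow> N' \<le> k \<or> (N \<le> k \<and> Q2 k \<omega>)" for k \<omega>
    define \<rho> where "\<rho> \<omega> = (LEAST k. Qp k \<omega>)" for \<omega>
    have QpN': "Qp N' \<omega>" for \<omega> unfolding Qp_def by simp
    have rhoN': "\<rho> \<omega> \<le> N'" for \<omega> unfolding \<rho>_def using QpN' by (rule Least_le)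
    have Qprho: "Qp (\<rho> \<omega>) \<omega>" for \<omega> unfolding \<rho>_def using QpN' by (rule LeastI)
    have notQ: "k < \<rho> \<omega> \<Longrightarrow> \<not> Qp k \<omega>" for k \<omega> unfolding \<rho>_def by (rule not_less_Least)
    have rho_le: "\<rho> \<omega> \<le> n \<longleftrightarrow> (\<exists>k\<le>n. Qp k \<omega>)" for \<omega> n
      using Qprho notQ by (meson not_le order_trans)
    have QpG: "{\<omega>\<in>\<Omega>. Qp k \<omega>} \<in> sets (\<G> k)" for k
    proof -
      have sG: "\<Omega> = space (\<G> k)" using sp \<Omega>_def by simp
      have [measurable]: "X k \<in> borel_measurable (\<G> k)" using Xm by blast
      have "{\<omega>\<in>\<Omega>. Qp k \<omega>} = (if N' \<le> k then \<Omega> else if N \<le> k then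
               (\<Union>c\<in>V. B c \<inter> {\<omega>\<in>space (\<G> k). c - ennreal \<delta> \<le> X k \<omega>}) else {})"
        unfolding Qp_def Q2_def using B\<Omega> sG by auto
      moreover have "(\<Union>c\<in>V. B c \<inter> {\<omega>\<in>space (\<G> k). c - ennreal \<delta> \<le> X k \<omega>}) \<in> sets (\<G> k)" if "N \<le> k"
      proof -
        have "B c \<inter> {\<omega>\<in>space (\<G> k). c - ennreal \<delta> \<le> X k \<omega>} \<in> sets (\<G> k)" if "c \<in> V" for c
        proof -
          have "B c \<in> sets (\<G> k)" using NB(1) that monoN[OF \<open>N \<le> k\<close>] by blast
          moreover have "{\<omega>\<in>space (\<G> k). c - ennreal \<delta> \<le> X k \<omega>} \<in> sets (\<G> k)" by measurable
          ultimately show ?thesis by blast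
        qed
        then show ?thesis using finV by (intro sets.finite_UN) auto
      qed
      ultimately show ?thesis using sG by auto
    qed
    define \<sigma> where "\<sigma> \<omega> = min (\<tau> \<omega>) (enat (\<rho> \<omega>))" for \<omega>
    have sigma_st: "stopping_time \<G> \<sigma>"
      unfolding stopping_time_def
    proof
      fix n
      have sG: "space (\<G> n) = \<Omega>" using sp \<Omega>_def by simp
      have "{\<omega> \<in> space (\<G> n). \<sigma> \<omega> \<le> enat n} = {\<omega>\<in>space (\<G> n). \<tau> \<omega> \<le> enat n} \<union> (\<Union>k\<in>{..n}. {\<omega>\<in>\<Omega>. Qp k \<omega>})"
        unfolding \<sigma>_def using rho_le sG by (auto simp: min_le_iff_disj)
      moreover have "{\<omega>\<in>space (\<G> n). \<tau> \<omega> \<le> enat n} \<in> sets (\<G> n)" using tau unfolding stopping_time_def by simp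
      moreover have "(\<Union>k\<in>{..n}. {\<omega>\<in>\<Omega>. Qp k \<omega>}) \<in> sets (\<G> n)"
        using QpG monoN by (intro sets.finite_UN) auto
      ultimately show "{\<omega> \<in> space (\<G> n). \<sigma> \<omega> \<le> enat n} \<in> sets (\<G> n)" by auto
    qed
    have sigma_bd: "\<forall>\<omega>\<in>space P. \<sigma> \<omega> \<le> enat N'" unfolding \<sigma>_def using rhoN' by (auto simp: min_le_iff_disj)
    have int_sigma: "(\<integral>\<^sup>+\<omega>. stopped X \<sigma> \<omega> \<partial>P) \<le> 1" using bnd sigma_st sigma_bd by blast
    define Good where "Good = \<Omega> - Bad1 - D N'"
    define Bad where "Bad = Bad1 \<union> D N'"
    have GoodP: "Good \<in> sets P" unfolding Good_def \<Omega>_def using Bad1P DP by auto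
    have BadP: "Bad \<in> sets P" unfolding Bad_def using Bad1P DP by auto
    have good_bound: "g \<omega> - ennreal \<delta> \<le> stopped X \<sigma> \<omega>" if "\<omega> \<in> Good" for \<omega>
    proof -
      have w\<Omega>: "\<omega> \<in> \<Omega>" and wB1: "\<omega> \<notin> Bad1" and wD: "\<omega> \<notin> D N'" using that unfolding Good_def by auto
      have gV: "g \<omega> \<in> V" using w\<Omega> unfolding V_def by auto
      have inA: "\<omega> \<in> A (g \<omega>)" using w\<Omega> unfolding A_def by auto
      have inB: "\<omega> \<in> B (g \<omega>)" using wB1 inA gV unfolding Bad1_def sdiff_def by blast
      have onlyB: "c = g \<omega>" if "c \<in> V" "\<omega> \<in> B c" for c
        using wB1 that unfolding Bad1_def sdiff_def A_def by blast
      have Q2iff: "Q2 k \<omega> \<longleftrightarrow> g \<omega> - ennreal \<delta> \<le> X k \<omega>" for k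
        unfolding Q2_def using onlyB inB gV by blast
      show ?thesis
      proof (cases "\<tau> \<omega> \<le> enat (\<rho> \<omega>)")
        case True
        then obtain j where j: "\<tau> \<omega> = enat j" by (cases "\<tau> \<omega>") auto
        have "\<sigma> \<omega> = \<tau> \<omega>" unfolding \<sigma>_def using True by simp
        then have "stopped X \<sigma> \<omega> = stopped X \<tau> \<omega>" unfolding stopped_def by simp
        then show ?thesis using gle w\<Omega> \<Omega>_def by (metis diff_le_self_ennreal order_trans)
      next
        case False
        then have s: "\<sigma> \<omega> = enat (\<rho> \<omega>)" unfolding \<sigma>_def by simp
        have tgt: "enat (\<rho> \<omega>) < \<tau> \<omega>" using False by simp
        show ?thesis
        proof (cases "g \<omega> - ennreal \<delta> \<le> X (\<rho> \<omega>) \<omega>")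
          case True then show ?thesis using s unfolding stopped_def by simp
        next
          case F2: False
          have "\<not> (N \<le> \<rho> \<omega> \<and> Q2 (\<rho> \<omega>) \<omega>)" using F2 Q2iff by blast
          then have "N' \<le> \<rho> \<omega>" using Qprho[of \<omega>] unfolding Qp_def by blast
          then have r: "\<rho> \<omega> = N'" using rhoN'[of \<omega>] by simp
          have "X k \<omega> < g \<omega> - ennreal \<delta>" if "k \<in> {N..N'}" for k
          proof (cases "k = N'")
            case True then show ?thesis using F2 r by (simp add: not_le)
          next
            case False
            then have "k < \<rho> \<omega>" using that r by auto
            then have "\<not> Qp k \<omega>" by (rule notQ)
            then show ?thesis using that Q2iff unfolding Qp_def by (auto simp: not_le)
          qed
          then have "\<omega> \<in> D N'" unfolding D_def using w\<Omega> tgt r by auto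
          then show ?thesis using wD by blast
        qed
      qed
    qed
    define h where "h \<omega> = (g \<omega> - ennreal \<delta>) * indicator Good \<omega>" for \<omega>
    have hP[measurable]: "h \<in> borel_measurable P" unfolding h_def using GoodP by measurable
    have int_h: "(\<integral>\<^sup>+\<omega>. h \<omega> \<partial>P) \<le> 1"
    proof -
      have "(\<integral>\<^sup>+\<omega>. h \<omega> \<partial>P) \<le> (\<integral>\<^sup>+\<omega>. stopped X \<sigma> \<omega> \<partial>P)"
        by (rule nn_integral_mono) (auto simp: h_def good_bound split: split_indicator)
      then show ?thesis using int_sigma by (rule order_trans)
    qed
    have pw: "g \<omega> \<le> h \<omega> + (ennreal \<delta> + C * indicator Bad \<omega>)" if "\<omega> \<in> space P" for \<omega>
    proof (cases "\<omega> \<in> Good")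
      case True
      have h\<omega>: "h \<omega> = g \<omega> - ennreal \<delta>" using True unfolding h_def by simp
      have "g \<omega> \<le> h \<omega> + ennreal \<delta>" unfolding h\<omega> by (rule ennreal_l2)
      also have "\<dots> \<le> h \<omega> + (ennreal \<delta> + C * indicator Bad \<omega>)" by (intro add_left_mono) simp
      finally show ?thesis .
    next
      case False
      then have "\<omega> \<in> Bad" using that unfolding Good_def Bad_def \<Omega>_def by auto
      then have "C * indicator Bad \<omega> = C" by simp
      moreover have "g \<omega> \<le> C" using gC that unfolding \<Omega>_def by simp
      ultimately have "g \<omega> \<le> C * indicator Bad \<omega>" by simp
      then show ?thesis using ennreal_l1[of "C * indicator Bad \<omega>" "h \<omega>" "ennreal \<delta>"] by (rule order_trans)
    qed
    have i0: "(\<integral>\<^sup>+\<omega>. g \<omega> \<partial>P) \<le> (\<integral>\<^sup>+\<omega>. h \<omega> + (ennreal \<delta> + C * indicator Bad \<omega>) \<partial>P)"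
      using pw by (intro nn_integral_mono) auto
    have i1: "(\<integral>\<^sup>+\<omega>. h \<omega> + (ennreal \<delta> + C * indicator Bad \<omega>) \<partial>P) = (\<integral>\<^sup>+\<omega>. h \<omega> \<partial>P) + (\<integral>\<^sup>+\<omega>. (ennreal \<delta> + C * indicator Bad \<omega>) \<partial>P)"
      using BadP by (intro nn_integral_add) auto
    have i2: "(\<integral>\<^sup>+\<omega>. (ennreal \<delta> + C * indicator Bad \<omega>) \<partial>P) = ennreal \<delta> + C * emeasure P Bad"
      using BadP by (subst nn_integral_add) (auto simp: nn_integral_cmult_indicator emeasure_space_1)
    have i3: "emeasure P Bad \<le> ennreal (2 * \<eta>)"
    proof -
      have "measure P Bad \<le> measure P Bad1 + measure P (D N')" unfolding Bad_def
        using Bad1P DP by (intro measure_Un_le) auto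
      also have "\<dots> < 2 * \<eta>" using NB(2) DN' unfolding Bad1_def by linarith
      finally have "measure P Bad \<le> 2 * \<eta>" by (rule less_imp_le)
      then show ?thesis unfolding emeasure_eq_measure by (rule ennreal_leI)
    qed
    have fin1: "(\<integral>\<^sup>+\<omega>. g \<omega> \<partial>P) \<le> (\<integral>\<^sup>+\<omega>. h \<omega> \<partial>P) + (ennreal \<delta> + C * emeasure P Bad)"
      using i0 unfolding i1 i2 .
    have fin2: "(\<integral>\<^sup>+\<omega>. h \<omega> \<partial>P) + (ennreal \<delta> + C * emeasure P Bad) \<le> 1 + (ennreal \<delta> + C * ennreal (2 * \<eta>))"
      by (rule add_mono[OF int_h add_left_mono[OF mult_left_mono[OF i3]]]) simp
    have eqr: "ennreal \<delta> + C * ennreal (2 * \<eta>) = ennreal (\<delta> + c0 * (2 * \<eta>))"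
      using Cc0 \<delta>pos \<eta>pos by (simp add: ennreal_mult ennreal_plus)
    have r: "\<delta> + c0 * (2 * \<eta>) \<le> e"
    proof -
      have "c0 * (2 * \<eta>) = (e / 2) * (c0 / (c0 + 1))" unfolding \<eta>_def using Cc0 by (simp add: field_simps)
      also have "\<dots> \<le> (e/2) * 1" using Cc0 \<open>0 < e\<close> by (intro mult_left_mono) auto
      finally show ?thesis unfolding \<delta>_def by simp
    qed
    have fin3: "1 + (ennreal \<delta> + C * ennreal (2 * \<eta>)) \<le> 1 + ennreal e"
      unfolding eqr by (rule add_left_mono[OF ennreal_leI[OF r]])
    show "(\<integral>\<^sup>+\<omega>. g \<omega> \<partial>P) \<le> 1 + ennreal e"
      using order_trans[OF fin1 order_trans[OF fin2 fin3]] .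
  qed
qed


lemma stage2:
  fixes P :: "'a measure" and \<G> :: "nat \<Rightarrow> 'a measure" and X :: "nat \<Rightarrow> 'a \<Rightarrow> ennreal"
    and \<tau> :: "'a \<Rightarrow> enat"
  assumes prob: "prob_space P"
    and sp: "\<forall>n. space (\<G> n) = space P"
    and mono: "\<forall>n. sets (\<G> n) \<subseteq> sets (\<G> (Suc n))"
    and sub: "\<forall>n. sets (\<G> n) \<subseteq> sets P"
    and Xm: "\<forall>n. X n \<in> borel_measurable (\<G> n)"
    and bnd: "\<forall>\<sigma> K. stopping_time \<G> \<sigma> \<longrightarrow> (\<forall>\<omega>\<in>space P. \<sigma> \<omega> \<le> enat K) \<longrightarrow> (\<integral>\<^sup>+\<omega>. stopped X \<sigma> \<omega> \<partial>P) \<le> 1"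
    and tau: "stopping_time \<G> \<tau>"
  shows "(\<integral>\<^sup>+\<omega>. stopped X \<tau> \<omega> \<partial>P) \<le> 1"
proof -
  define Minf where "Minf = sigma (space P) (\<Union>n. sets (\<G> n))"
  have gen: "(\<Union>n. sets (\<G> n)) \<subseteq> sets P" using sub by blast
  have genP: "(\<Union>n. sets (\<G> n)) \<subseteq> Pow (space P)" using gen sets.sets_into_space by blast
  have sM: "sets Minf = sigma_sets (space P) (\<Union>n. sets (\<G> n))" using genP by (simp add: Minf_def)
  have spM: "space Minf = space P" using genP by (simp add: Minf_def)
  have subalg: "subalgebra P Minf"
    unfolding subalgebra_def using spM sM sets.sigma_sets_subset[OF gen] by simp
  have subalgG: "subalgebra Minf (\<G> n)" for n
  proof -
    have "sets (\<G> n) \<subseteq> sets Minf" unfolding sM by (intro subsetI sigma_sets.Basic) auto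
    then show ?thesis unfolding subalgebra_def using sp spM by auto
  qed
  have XmM: "\<forall>n. X n \<in> borel_measurable Minf" using measurable_from_subalg[OF subalgG] Xm by blast
  have tauM: "\<forall>n. {\<omega>\<in>space Minf. \<tau> \<omega> \<le> enat n} \<in> sets Minf"
  proof
    fix n
    have 1: "{\<omega>\<in>space (\<G> n). \<tau> \<omega> \<le> enat n} \<in> sets (\<G> n)" using tau unfolding stopping_time_def by simp
    have "space (\<G> n) = space Minf" using sp spM by simp
    then show "{\<omega>\<in>space Minf. \<tau> \<omega> \<le> enat n} \<in> sets Minf"
      using 1 subalgG[of n] unfolding subalgebra_def by auto
  qed
  have YM: "stopped X \<tau> \<in> borel_measurable Minf" by (rule stopped_measurable[OF tauM XmM])
  obtain f where f: "\<And>i. simple_function Minf (f i)" "incseq f" "\<And>i x. f i x < top"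
    "\<And>x. (SUP i. f i x) = stopped X \<tau> x"
    using borel_measurable_implies_simple_function_sequence'[OF YM] by blast
  have fle: "f i x \<le> stopped X \<tau> x" for i x using f(4)[of x] by (metis SUP_upper UNIV_I)
  have fint: "(\<integral>\<^sup>+\<omega>. f i \<omega> \<partial>P) \<le> 1" for i
  proof (rule stage2_key[OF prob sp mono sub Xm bnd tau])
    show "simple_function (sigma (space P) (\<Union>n. sets (\<G> n))) (f i)" using f(1) unfolding Minf_def .
    show "\<forall>\<omega>\<in>space P. f i \<omega> \<le> stopped X \<tau> \<omega>" using fle by simp
    show "\<forall>\<omega>. f i \<omega> < top" using f(3) by simp
  qed
  have fP: "f i \<in> borel_measurable P" for i
    using measurable_from_subalg[OF subalg borel_measurable_simple_function[OF f(1)]] .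
  have "(\<integral>\<^sup>+\<omega>. stopped X \<tau> \<omega> \<partial>P) = (\<integral>\<^sup>+\<omega>. (SUP i. f i \<omega>) \<partial>P)" using f(4) by simp
  also have "\<dots> = (SUP i. \<integral>\<^sup>+\<omega>. f i \<omega> \<partial>P)" by (rule nn_integral_monotone_convergence_SUP[OF f(2) fP])
  also have "\<dots> \<le> 1" using fint by (rule SUP_least)
  finally show ?thesis .
qed



lemma ennreal_le_plus_absdiff: "(x::ennreal) \<le> y + absdiff x y"
proof -
  have "x \<le> (x - y) + y" unfolding diff_add_self_ennreal by auto
  also have "\<dots> = y + (x - y)" by (simp add: add.commute)
  also have "\<dots> \<le> y + absdiff x y" unfolding absdiff_def by (intro add_left_mono) simp
  finally show ?thesis .
qed

lemma limsup_add_const_ennreal: "limsup (\<lambda>n. a n + (c::ennreal)) = limsup a + c"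
proof -
  have "limsup (\<lambda>n. a n + c) = (INF n. SUP m\<in>{n..}. a m + c)" by (rule limsup_INF_SUP)
  also have "\<dots> = (INF n. (SUP m\<in>{n..}. a m) + c)"
    by (intro INF_cong refl ennreal_SUP_add_left) auto
  also have "\<dots> = (INF n. SUP m\<in>{n..}. a m) + c" by (rule INF_ennreal_add_const)
  also have "\<dots> = limsup a + c" by (simp add: limsup_INF_SUP)
  finally show ?thesis .
qed

lemma term_le_suminf_ennreal: "(f n :: ennreal) \<le> (\<Sum>i. f i)"
  using sum_le_suminf[OF summableI, of "{n}" f] by simp

lemma pwB:
  fixes e g :: "nat \<Rightarrow> ennreal" and t rr :: enat
  assumes "t \<le> rr"
  shows "(case t of enat n \<Rightarrow> e n | \<infinity> \<Rightarrow> limsup e) \<le>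
         (case t of enat n \<Rightarrow> g n | \<infinity> \<Rightarrow> limsup g) + (\<Sum>n. if enat n \<le> rr then absdiff (e n) (g n) else 0)"
proof -
  define S where "S = (\<Sum>n. if enat n \<le> rr then absdiff (e n) (g n) else 0)"
  have trm: "absdiff (e n) (g n) \<le> S" if "enat n \<le> rr" for n
    unfolding S_def using term_le_suminf_ennreal[of "\<lambda>n. if enat n \<le> rr then absdiff (e n) (g n) else 0" n] that by simp
  show ?thesis
  proof (cases t)
    case (enat k)
    then have k: "enat k \<le> rr" using assms by simp
    have "e k \<le> g k + absdiff (e k) (g k)" by (rule ennreal_le_plus_absdiff)
    also have "\<dots> \<le> g k + S" using trm[OF k] by (rule add_left_mono)
    finally show ?thesis using enat unfolding S_def by simp
  next
    case infinity
    then have rr: "rr = \<infinity>" using assms by simp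
    have "e n \<le> g n + S" for n
    proof -
      have "e n \<le> g n + absdiff (e n) (g n)" by (rule ennreal_le_plus_absdiff)
      also have "\<dots> \<le> g n + S" using trm[of n] rr by (intro add_left_mono) simp
      finally show ?thesis .
    qed
    then have "limsup e \<le> limsup (\<lambda>n. g n + S)" by (intro Limsup_mono) auto
    also have "\<dots> = limsup g + S" by (rule limsup_add_const_ennreal)
    finally show ?thesis using infinity unfolding S_def by simp
  qed
qed

lemma arr_facts:
  assumes "filtration_array M F"
  shows "space (F m n) = space M" "sets (F m n) \<subseteq> sets M"
    "sets (F m n) \<subseteq> sets (F m (Suc n))" "sets (F m n) \<subseteq> sets (F (Suc m) n)"
  using assms unfolding filtration_array_def filtration_sequence_def filtration_def sub_sigma_def by auto

lemma Finf_facts: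
  assumes arr: "filtration_array M F"
  shows "sets (F_inf M F n) = sigma_sets (space M) (\<Union>m. sets (F m n))"
    "space (F_inf M F n) = space M"
    "sets (F_inf M F n) \<subseteq> sets M"
    "sets (F m n) \<subseteq> sets (F_inf M F n)"
    "sets (F_inf M F n) \<subseteq> sets (F_inf M F (Suc n))"
proof -
  have gen: "(\<Union>m. sets (F m n)) \<subseteq> sets M" for n using arr_facts(2)[OF arr] by blast
  have genP: "(\<Union>m. sets (F m n)) \<subseteq> Pow (space M)" for n using gen[of n] sets.sets_into_space by blast
  show s: "sets (F_inf M F n) = sigma_sets (space M) (\<Union>m. sets (F m n))" for n
    unfolding F_inf_def using genP by simp
  show "space (F_inf M F n) = space M" unfolding F_inf_def using genP by simp
  show "sets (F_inf M F n) \<subseteq> sets M" unfolding s using sets.sigma_sets_subset[OF gen] .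
  show "sets (F m n) \<subseteq> sets (F_inf M F n)" unfolding s by (intro subsetI sigma_sets.Basic) auto
  have "(\<Union>m. sets (F m n)) \<subseteq> (\<Union>m. sets (F m (Suc n)))" using arr_facts(3)[OF arr] by blast
  then show "sets (F_inf M F n) \<subseteq> sets (F_inf M F (Suc n))" unfolding s by (rule sigma_sets_subseteq)
qed


lemma partB_single:
  fixes M :: "'a measure" and Ps :: "'a measure set" and F :: "nat \<Rightarrow> nat \<Rightarrow> 'a measure"
    and E :: "nat \<Rightarrow> nat \<Rightarrow> 'a \<Rightarrow> ennreal" and G :: "nat \<Rightarrow> 'a \<Rightarrow> ennreal"
  assumes probs: "\<forall>P\<in>Ps. prob_space P \<and> sets P = sets M"
    and arr: "filtration_array M F"
    and adaptedE: "\<forall>m n. E m n \<in> borel_measurable (F m n)"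
    and adaptedG: "\<forall>n. G n \<in> borel_measurable (F_inf M F n)"
    and ep: "eprocess Ps (F_inf M F) G"
    and P: "P \<in> Ps"
    and tb: "t \<in> bounded_stopping_times rr (F m) Ps"
  shows "(\<integral>\<^sup>+\<omega>. stopped (E m) t \<omega> \<partial>P) \<le> 1 + (\<Sum>n. if enat n \<le> rr then L1_dist_sup Ps (E m n) (G n) else 0)"
proof -
  interpret prob_space P using probs P by blast
  have sP: "sets P = sets M" using probs P by blast
  have spP: "space P = space M" using sets_eq_imp_space_eq[OF sP] .
  have tst: "stopping_time (F m) t" and tmeas: "emeasure P {\<omega>\<in>space P. t \<omega> \<le> rr} = 1"
    using tb P unfolding bounded_stopping_times_def by auto
  have tFm: "{\<omega>\<in>space M. t \<omega> \<le> enat n} \<in> sets (F m n)" for n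
  proof -
    have "{\<omega>\<in>space (F m n). t \<omega> \<le> enat n} \<in> sets (F m n)" using tst unfolding stopping_time_def by simp
    then show ?thesis using arr_facts(1)[OF arr, of m n] by simp
  qed
  have tP: "\<forall>n. {\<omega>\<in>space P. t \<omega> \<le> enat n} \<in> sets P"
  proof
    fix n
    have "{\<omega>\<in>space M. t \<omega> \<le> enat n} \<in> sets M" using subsetD[OF arr_facts(2)[OF arr] tFm] .
    then show "{\<omega>\<in>space P. t \<omega> \<le> enat n} \<in> sets P" using sP spP by simp
  qed
  have tinf: "stopping_time (F_inf M F) t"
    unfolding stopping_time_def
  proof
    fix n
    have "{\<omega>\<in>space M. t \<omega> \<le> enat n} \<in> sets (F_inf M F n)" using subsetD[OF Finf_facts(4)[OF arr] tFm] .
    then show "{\<omega>\<in>space (F_inf M F n). t \<omega> \<le> enat n} \<in> sets (F_inf M F n)" using Finf_facts(2)[OF arr] by simp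
  qed
  have "\<forall>P\<in>Ps. (\<integral>\<^sup>+\<omega>. stopped G t \<omega> \<partial>P) \<le> 1" using ep tinf unfolding eprocess_def by simp
  then have intG: "(\<integral>\<^sup>+\<omega>. stopped G t \<omega> \<partial>P) \<le> 1" using P by simp
  have subF: "subalgebra P (F m n)" for n
    unfolding subalgebra_def using arr_facts(1,2)[OF arr] sP spP by simp
  have subFi: "subalgebra P (F_inf M F n)" for n
    unfolding subalgebra_def using Finf_facts(2,3)[OF arr] sP spP by simp
  have EP[measurable]: "E m n \<in> borel_measurable P" for n
    using measurable_from_subalg[OF subF] adaptedE by blast
  have GP[measurable]: "G n \<in> borel_measurable P" for n
    using measurable_from_subalg[OF subFi] adaptedG by blast
  have stGP: "stopped G t \<in> borel_measurable P" by (rule stopped_measurable[OF tP]) simp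
  have setP: "{\<omega>\<in>space P. t \<omega> \<le> rr} \<in> sets P"
    using tmeas emeasure_notin_sets by fastforce
  have AEt: "AE \<omega> in P. t \<omega> \<le> rr"
  proof -
    have "prob {\<omega>\<in>space P. t \<omega> \<le> rr} = 1" using tmeas by (simp add: measure_def)
    then have "AE \<omega> in P. \<omega> \<in> {\<omega>\<in>space P. t \<omega> \<le> rr}" using AE_in_set_eq_1[OF setP] by simp
    then show ?thesis by auto
  qed
  define S where "S \<omega> = (\<Sum>n. if enat n \<le> rr then absdiff (E m n \<omega>) (G n \<omega>) else 0)" for \<omega>
  have absP[measurable]: "(\<lambda>\<omega>. absdiff (E m n \<omega>) (G n \<omega>)) \<in> borel_measurable P" for n
    unfolding absdiff_def by measurable
  have SP: "S \<in> borel_measurable P" unfolding S_def by measurable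
  have j1: "(\<integral>\<^sup>+\<omega>. stopped (E m) t \<omega> \<partial>P) \<le> (\<integral>\<^sup>+\<omega>. stopped G t \<omega> + S \<omega> \<partial>P)"
  proof (rule nn_integral_mono_AE)
    show "AE \<omega> in P. stopped (E m) t \<omega> \<le> stopped G t \<omega> + S \<omega>"
      using AEt
    proof eventually_elim
      case (elim \<omega>)
      show ?case unfolding stopped_def S_def by (rule pwB[OF elim])
    qed
  qed
  have j2: "(\<integral>\<^sup>+\<omega>. stopped G t \<omega> + S \<omega> \<partial>P) = (\<integral>\<^sup>+\<omega>. stopped G t \<omega> \<partial>P) + (\<integral>\<^sup>+\<omega>. S \<omega> \<partial>P)"
    by (rule nn_integral_add[OF stGP SP])
  have j3: "(\<integral>\<^sup>+\<omega>. S \<omega> \<partial>P) = (\<Sum>n. \<integral>\<^sup>+\<omega>. (if enat n \<le> rr then absdiff (E m n \<omega>) (G n \<omega>) else 0) \<partial>P)"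
    unfolding S_def by (rule nn_integral_suminf) measurable
  have j4: "(\<Sum>n. \<integral>\<^sup>+\<omega>. (if enat n \<le> rr then absdiff (E m n \<omega>) (G n \<omega>) else 0) \<partial>P) \<le> (\<Sum>n. if enat n \<le> rr then L1_dist_sup Ps (E m n) (G n) else 0)"
  proof (rule suminf_le[OF _ summableI summableI])
    fix n
    show "(\<integral>\<^sup>+\<omega>. (if enat n \<le> rr then absdiff (E m n \<omega>) (G n \<omega>) else 0) \<partial>P) \<le> (if enat n \<le> rr then L1_dist_sup Ps (E m n) (G n) else 0)"
      unfolding L1_dist_sup_def using P by (auto intro: SUP_upper)
  qed
  have "(\<integral>\<^sup>+\<omega>. stopped (E m) t \<omega> \<partial>P) \<le> (\<integral>\<^sup>+\<omega>. stopped G t \<omega> \<partial>P) + (\<integral>\<^sup>+\<omega>. S \<omega> \<partial>P)"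
    using j1 unfolding j2 .
  also have "\<dots> \<le> 1 + (\<Sum>n. if enat n \<le> rr then L1_dist_sup Ps (E m n) (G n) else 0)"
    unfolding j3 using intG j4 by (rule add_mono)
  finally show ?thesis .
qed

lemma partB:
  fixes M :: "'a measure" and Ps :: "'a measure set" and F :: "nat \<Rightarrow> nat \<Rightarrow> 'a measure"
    and E :: "nat \<Rightarrow> nat \<Rightarrow> 'a \<Rightarrow> ennreal" and G :: "nat \<Rightarrow> 'a \<Rightarrow> ennreal"
  assumes probs: "\<forall>P\<in>Ps. prob_space P \<and> sets P = sets M"
    and arr: "filtration_array M F"
    and adaptedE: "\<forall>m n. E m n \<in> borel_measurable (F m n)"
    and adaptedG: "\<forall>n. G n \<in> borel_measurable (F_inf M F n)"
    and ep: "eprocess Ps (F_inf M F) G"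
    and sc: "sum_condition Ps E G r"
  shows "asymptotic_eprocess Ps F r E"
  unfolding asymptotic_eprocess_def
proof (intro allI impI)
  fix \<tau> assume \<tau>: "\<forall>m. \<tau> m \<in> bounded_stopping_times (r m) (F m) Ps"
  define s where "s m = (\<Sum>n. if enat n \<le> r m then L1_dist_sup Ps (E m n) (G n) else 0)" for m
  have s0: "s \<longlonglongrightarrow> 0" using sc unfolding sum_condition_def s_def .
  have le: "(SUP P\<in>Ps. \<integral>\<^sup>+ \<omega>. stopped (E m) (\<tau> m) \<omega> \<partial>P) \<le> 1 + s m" for m
    unfolding s_def using partB_single[OF probs arr adaptedE adaptedG ep _ \<tau>[rule_format, of m]]
    by (intro SUP_least) auto
  have "(\<lambda>m. 1 + s m) \<longlonglongrightarrow> 1 + 0" by (intro tendsto_add tendsto_const s0)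
  then have lim1: "limsup (\<lambda>m. 1 + s m) = 1" by (intro lim_imp_Limsup) auto
  have "limsup (\<lambda>m. SUP P\<in>Ps. \<integral>\<^sup>+ \<omega>. stopped (E m) (\<tau> m) \<omega> \<partial>P) \<le> limsup (\<lambda>m. 1 + s m)"
    using le by (intro Limsup_mono) auto
  then show "limsup (\<lambda>m. SUP P\<in>Ps. \<integral>\<^sup>+ \<omega>. stopped (E m) (\<tau> m) \<omega> \<partial>P) \<le> 1" using lim1 by simp
qed



lemma exists_inv_less_ennreal:
  assumes "(0::ennreal) < a" shows "\<exists>K::nat. ennreal (1 / real (Suc K)) < a"
proof (cases "a = top")
  case True then show ?thesis by (intro exI[of _ 0]) (simp add: top.not_eq_extremum)
next
  case False
  then obtain x where x: "a = ennreal x" "x \<ge> 0" by (cases a) auto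
  then have "x > 0" using assms by auto
  then obtain K where K: "inverse (real (Suc K)) < x" using reals_Archimedean by blast
  then have "ennreal (1 / real (Suc K)) < ennreal x" 
    using \<open>x > 0\<close> by (subst ennreal_less_iff) (auto simp: divide_inverse)
  then show ?thesis using x by blast
qed

lemma partC:
  fixes d :: "nat \<Rightarrow> nat \<Rightarrow> ennreal"
  assumes lim: "\<forall>n. (\<lambda>m. d m n) \<longlonglongrightarrow> 0"
  shows "\<exists>r. tends_to_infinity r \<and> (\<lambda>m. \<Sum>n. (if enat n \<le> r m then d m n else 0)) \<longlonglongrightarrow> 0"
proof -
  define SK where "SK m K = (\<Sum>j\<le>K. d m j)" for m K
  have SK0: "(\<lambda>m. SK m K) \<longlonglongrightarrow> 0" for K
  proof -
    have "(\<lambda>m. \<Sum>j\<le>K. d m j) \<longlonglongrightarrow> (\<Sum>j\<le>K. (0::ennreal))"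
      using lim by (intro tendsto_sum) auto
    then show ?thesis unfolding SK_def by simp
  qed
  have "\<forall>K. \<exists>N. \<forall>m\<ge>N. SK m K < ennreal (1 / real (Suc K))"
  proof
    fix K
    have "eventually (\<lambda>m. SK m K < ennreal (1 / real (Suc K))) sequentially"
      by (rule order_tendstoD(2)[OF SK0]) simp
    then show "\<exists>N. \<forall>m\<ge>N. SK m K < ennreal (1 / real (Suc K))" by (simp add: eventually_sequentially)
  qed
  then obtain Nf where Nf: "\<And>K m. Nf K \<le> m \<Longrightarrow> SK m K < ennreal (1 / real (Suc K))" by metis
  define good where "good m K \<longleftrightarrow> (\<forall>K'\<le>K. Nf K' \<le> m) \<and> K \<le> m" for m K
  define rv where "rv m = (if good m 0 then Max {K. good m K} else 0)" for m
  define r where "r m = enat (rv m)" for m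
  have fin: "finite {K. good m K}" for m
    by (rule finite_subset[of _ "{..m}"]) (auto simp: good_def)
  have rv_good: "good m (rv m)" if "good m 0" for m
    using Max_in[OF fin, of m] that unfolding rv_def by auto
  have rv_ge: "K \<le> rv m" if "good m K" for m K
  proof -
    have "good m 0" using that unfolding good_def by auto
    then show ?thesis unfolding rv_def using Max_ge[OF fin, of K m] that by auto
  qed
  have ev_good: "eventually (\<lambda>m. good m K) sequentially" for K
  proof -
    have "good m K" if "max K (Max (Nf ` {..K})) \<le> m" for m
    proof -
      have "Nf K' \<le> m" if "K' \<le> K" for K'
      proof -
        have a: "Nf K' \<le> Max (Nf ` {..K})" using that by (intro Max_ge) auto
        have b: "Max (Nf ` {..K}) \<le> m" using \<open>max K (Max (Nf ` {..K})) \<le> m\<close> by (simp only: max.bounded_iff)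
        show ?thesis using order_trans[OF a b] .
      qed
      then show ?thesis unfolding good_def using that by simp
    qed
    then show ?thesis unfolding eventually_sequentially by blast
  qed
  have tti: "tends_to_infinity r"
    unfolding tends_to_infinity_def
  proof
    fix K
    show "eventually (\<lambda>m. enat K \<le> r m) sequentially"
      using ev_good[of K] by eventually_elim (simp add: r_def rv_ge)
  qed
  have sum_eq: "(\<Sum>n. (if enat n \<le> r m then d m n else 0)) = SK m (rv m)" for m
  proof -
    have "(\<Sum>n. (if enat n \<le> r m then d m n else 0)) = (\<Sum>n\<in>{..rv m}. (if enat n \<le> r m then d m n else 0))"
      by (rule suminf_finite) (auto simp: r_def)
    also have "\<dots> = SK m (rv m)" unfolding SK_def r_def by (intro sum.cong) auto
    finally show ?thesis .
  qed
  have "(\<lambda>m. SK m (rv m)) \<longlonglongrightarrow> 0"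
  proof (rule order_tendstoI)
    fix a :: ennreal assume "a < 0" then show "eventually (\<lambda>m. a < SK m (rv m)) sequentially" by simp
  next
    fix a :: ennreal assume "0 < a"
    then obtain K where K: "ennreal (1 / real (Suc K)) < a" using exists_inv_less_ennreal by blast
    show "eventually (\<lambda>m. SK m (rv m) < a) sequentially"
      using ev_good[of K]
    proof eventually_elim
      case (elim m)
      have g0: "good m 0" using elim unfolding good_def by auto
      have Kr: "K \<le> rv m" by (rule rv_ge[OF elim])
      have "Nf (rv m) \<le> m" using rv_good[OF g0] unfolding good_def by auto
      then have "SK m (rv m) < ennreal (1 / real (Suc (rv m)))" by (rule Nf)
      also have "\<dots> \<le> ennreal (1 / real (Suc K))" using Kr by (intro ennreal_leI) (auto simp: frac_le)
      also have "\<dots> < a" by (rule K)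
      finally show ?case .
    qed
  qed
  then show ?thesis using tti sum_eq by (intro exI[of _ r]) simp
qed


lemma nat_pre_meas:
  assumes "\<forall>n. {\<omega>\<in>space N. (\<tau>::'a\<Rightarrow>nat) \<omega> \<le> n} \<in> sets N"
  shows "\<tau> \<in> measurable N (count_space UNIV)"
proof -
  have "(\<lambda>\<omega>. enat (\<tau> \<omega>)) \<in> measurable N (count_space UNIV)" by (rule stopping_pre_meas) (use assms in simp)
  then have "(\<lambda>\<omega>. the_enat (enat (\<tau> \<omega>))) \<in> measurable N (count_space UNIV)"
    by (rule measurable_compose) (rule measurable_count_space)
  then show ?thesis by simp
qed

lemma one_less_one_plus_ennreal: "(x::real) > 0 \<Longrightarrow> 1 < 1 + ennreal x"
proof -
  assume "x > 0"
  then have "ennreal 1 < ennreal (1 + x)" by (subst ennreal_less_iff) auto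
  then show ?thesis using \<open>x > 0\<close> by (simp add: ennreal_plus[symmetric])
qed

lemma stage1_inner:
  fixes M :: "'a measure" and Ps :: "'a measure set" and F :: "nat \<Rightarrow> nat \<Rightarrow> 'a measure"
    and E :: "nat \<Rightarrow> nat \<Rightarrow> 'a \<Rightarrow> ennreal" and G :: "nat \<Rightarrow> 'a \<Rightarrow> ennreal" and \<tau>' :: "'a \<Rightarrow> nat"
  assumes probs: "\<forall>P\<in>Ps. prob_space P \<and> sets P = sets M"
    and arr: "filtration_array M F"
    and adaptedE: "\<forall>m n. E m n \<in> borel_measurable (F m n)"
    and adaptedG: "\<forall>n. G n \<in> borel_measurable (F_inf M F n)"
    and conv: "L1_unif_conv Ps E G"
    and asy: "asymptotic_eprocess Ps F r E"
    and rinf: "tends_to_infinity r"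
    and P: "P \<in> Ps"
    and tst: "\<forall>m\<ge>m0. \<forall>n. {\<omega>\<in>space M. \<tau>' \<omega> \<le> n} \<in> sets (F m n)"
    and tK: "\<forall>\<omega>. \<tau>' \<omega> \<le> K"
  shows "(\<integral>\<^sup>+\<omega>. G (\<tau>' \<omega>) \<omega> \<partial>P) \<le> 1"
proof -
  interpret prob_space P using probs P by blast
  have sP: "sets P = sets M" using probs P by blast
  have spP: "space P = space M" using sets_eq_imp_space_eq[OF sP] .
  have subF: "subalgebra P (F m n)" for m n
    unfolding subalgebra_def using arr_facts(1,2)[OF arr] sP spP by simp
  have subFi: "subalgebra P (F_inf M F n)" for n
    unfolding subalgebra_def using Finf_facts(2,3)[OF arr] sP spP by simp
  have EP[measurable]: "E m n \<in> borel_measurable P" for m n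
    using measurable_from_subalg[OF subF] adaptedE by blast
  have GP[measurable]: "G n \<in> borel_measurable P" for n
    using measurable_from_subalg[OF subFi] adaptedG by blast
  define \<tau>s where "\<tau>s m = (if m0 \<le> m \<and> enat K \<le> r m then (\<lambda>\<omega>. enat (\<tau>' \<omega>)) else (\<lambda>\<omega>. 0::enat))" for m
  have bst: "\<forall>m. \<tau>s m \<in> bounded_stopping_times (r m) (F m) Ps"
  proof
    fix m
    show "\<tau>s m \<in> bounded_stopping_times (r m) (F m) Ps"
    proof (cases "m0 \<le> m \<and> enat K \<le> r m")
      case True
      have st: "stopping_time (F m) (\<lambda>\<omega>. enat (\<tau>' \<omega>))"
        unfolding stopping_time_def
      proof
        fix n
        have "{\<omega>\<in>space M. \<tau>' \<omega> \<le> n} \<in> sets (F m n)" using tst True by blast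
        then show "{\<omega>\<in>space (F m n). enat (\<tau>' \<omega>) \<le> enat n} \<in> sets (F m n)"
          using arr_facts(1)[OF arr, of m n] by simp
      qed
      have em: "emeasure P' {\<omega>\<in>space P'. enat (\<tau>' \<omega>) \<le> r m} = 1" if "P' \<in> Ps" for P'
      proof -
        have "enat (\<tau>' \<omega>) \<le> r m" for \<omega>
          using tK True order_trans[of "enat (\<tau>' \<omega>)" "enat K" "r m"] by simp
        then have "{\<omega>\<in>space P'. enat (\<tau>' \<omega>) \<le> r m} = space P'" by auto
        then show ?thesis using probs that prob_space.emeasure_space_1 by metis
      qed
      show ?thesis using True st em unfolding bounded_stopping_times_def \<tau>s_def by simp
    next
      case False
      have st: "stopping_time (F m) (\<lambda>\<omega>. 0)"
        unfolding stopping_time_def by (simp add: zero_enat_def)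
      have em: "emeasure P' {\<omega>\<in>space P'. (0::enat) \<le> r m} = 1" if "P' \<in> Ps" for P'
      proof -
        have "prob_space P'" using probs that by blast
        then show ?thesis by (simp add: prob_space.emeasure_space_1)
      qed
      show ?thesis using False st em unfolding bounded_stopping_times_def \<tau>s_def by auto
    qed
  qed
  have "\<forall>\<tau>. (\<forall>m. \<tau> m \<in> bounded_stopping_times (r m) (F m) Ps) \<longrightarrow>
        limsup (\<lambda>m. SUP P\<in>Ps. \<integral>\<^sup>+ \<omega>. stopped (E m) (\<tau> m) \<omega> \<partial>P) \<le> 1"
    using asy unfolding asymptotic_eprocess_def by simp
  then have lim: "limsup (\<lambda>m. SUP P\<in>Ps. \<integral>\<^sup>+ \<omega>. stopped (E m) (\<tau>s m) \<omega> \<partial>P) \<le> 1"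
    using bst by blast
  have ev: "eventually (\<lambda>m. m0 \<le> m \<and> enat K \<le> r m) sequentially"
    using rinf unfolding tends_to_infinity_def by (intro eventually_conj) auto
  have ev2: "eventually (\<lambda>m. (\<integral>\<^sup>+\<omega>. E m (\<tau>' \<omega>) \<omega> \<partial>P) \<le> (SUP P\<in>Ps. \<integral>\<^sup>+ \<omega>. stopped (E m) (\<tau>s m) \<omega> \<partial>P)) sequentially"
    using ev
  proof eventually_elim
    case (elim m)
    then have "\<tau>s m = (\<lambda>\<omega>. enat (\<tau>' \<omega>))" unfolding \<tau>s_def by simp
    then have "(\<integral>\<^sup>+\<omega>. E m (\<tau>' \<omega>) \<omega> \<partial>P) = (\<integral>\<^sup>+ \<omega>. stopped (E m) (\<tau>s m) \<omega> \<partial>P)"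
      unfolding stopped_def by simp
    then show ?case using P by (metis SUP_upper)
  qed
  have limE: "limsup (\<lambda>m. \<integral>\<^sup>+\<omega>. E m (\<tau>' \<omega>) \<omega> \<partial>P) \<le> 1"
    using Limsup_mono[OF ev2] lim by (rule order_trans)
  define dK where "dK m = (\<Sum>j\<le>K. L1_dist_sup Ps (E m j) (G j))" for m
  have dK0: "dK \<longlonglongrightarrow> 0"
  proof -
    have "\<forall>n. (\<lambda>m. L1_dist_sup Ps (E m n) (G n)) \<longlonglongrightarrow> 0" using conv unfolding L1_unif_conv_def by simp
    then have "(\<lambda>m. \<Sum>j\<le>K. L1_dist_sup Ps (E m j) (G j)) \<longlonglongrightarrow> (\<Sum>j\<le>K. (0::ennreal))"
      by (intro tendsto_sum) auto
    then show ?thesis unfolding dK_def by simp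
  qed
  have tP: "\<forall>n. {\<omega>\<in>space P. \<tau>' \<omega> \<le> n} \<in> sets P"
  proof
    fix n
    have "{\<omega>\<in>space M. \<tau>' \<omega> \<le> n} \<in> sets (F m0 n)" using tst by blast
    then have "{\<omega>\<in>space M. \<tau>' \<omega> \<le> n} \<in> sets M" using arr_facts(2)[OF arr] by blast
    then show "{\<omega>\<in>space P. \<tau>' \<omega> \<le> n} \<in> sets P" using sP spP by simp
  qed
  have tmeas: "\<tau>' \<in> measurable P (count_space UNIV)" by (rule nat_pre_meas[OF tP])
  have EtP: "(\<lambda>\<omega>. E m (\<tau>' \<omega>) \<omega>) \<in> borel_measurable P" for m
    by (rule measurable_compose_countable[OF _ tmeas]) simp
  have GtP: "(\<lambda>\<omega>. G (\<tau>' \<omega>) \<omega>) \<in> borel_measurable P"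
    by (rule measurable_compose_countable[OF _ tmeas]) simp
  have absP[measurable]: "(\<lambda>\<omega>. absdiff (E m n \<omega>) (G n \<omega>)) \<in> borel_measurable P" for m n
    unfolding absdiff_def by measurable
  have bound: "(\<integral>\<^sup>+\<omega>. G (\<tau>' \<omega>) \<omega> \<partial>P) \<le> (\<integral>\<^sup>+\<omega>. E m (\<tau>' \<omega>) \<omega> \<partial>P) + dK m" for m
  proof -
    have pw: "G (\<tau>' \<omega>) \<omega> \<le> E m (\<tau>' \<omega>) \<omega> + (\<Sum>j\<le>K. absdiff (E m j \<omega>) (G j \<omega>))" for \<omega>
    proof -
      have "G (\<tau>' \<omega>) \<omega> \<le> E m (\<tau>' \<omega>) \<omega> + absdiff (G (\<tau>' \<omega>) \<omega>) (E m (\<tau>' \<omega>) \<omega>)"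
        by (rule ennreal_le_plus_absdiff)
      also have "absdiff (G (\<tau>' \<omega>) \<omega>) (E m (\<tau>' \<omega>) \<omega>) = absdiff (E m (\<tau>' \<omega>) \<omega>) (G (\<tau>' \<omega>) \<omega>)"
        unfolding absdiff_def by (simp add: add.commute)
      also have "absdiff (E m (\<tau>' \<omega>) \<omega>) (G (\<tau>' \<omega>) \<omega>) \<le> (\<Sum>j\<le>K. absdiff (E m j \<omega>) (G j \<omega>))"
        using tK by (intro member_le_sum) auto
      finally show ?thesis by (simp add: add_left_mono)
    qed
    have "(\<integral>\<^sup>+\<omega>. G (\<tau>' \<omega>) \<omega> \<partial>P) \<le> (\<integral>\<^sup>+\<omega>. E m (\<tau>' \<omega>) \<omega> + (\<Sum>j\<le>K. absdiff (E m j \<omega>) (G j \<omega>)) \<partial>P)"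
      using pw by (intro nn_integral_mono) auto
    also have "\<dots> = (\<integral>\<^sup>+\<omega>. E m (\<tau>' \<omega>) \<omega> \<partial>P) + (\<integral>\<^sup>+\<omega>. (\<Sum>j\<le>K. absdiff (E m j \<omega>) (G j \<omega>)) \<partial>P)"
      using EtP by (intro nn_integral_add) auto
    also have "(\<integral>\<^sup>+\<omega>. (\<Sum>j\<le>K. absdiff (E m j \<omega>) (G j \<omega>)) \<partial>P) = (\<Sum>j\<le>K. \<integral>\<^sup>+\<omega>. absdiff (E m j \<omega>) (G j \<omega>) \<partial>P)"
      by (rule nn_integral_sum) simp
    also have "\<dots> \<le> dK m" unfolding dK_def L1_dist_sup_def
      using P by (intro sum_mono SUP_upper)
    finally show ?thesis by (simp add: add_left_mono)
  qed
  show ?thesis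
  proof (rule ennreal_le_epsilon)
    fix e :: real assume "0 < e"
    then have e2: "e/2 > 0" by simp
    have "eventually (\<lambda>m. (\<integral>\<^sup>+\<omega>. E m (\<tau>' \<omega>) \<omega> \<partial>P) < 1 + ennreal (e/2)) sequentially"
      using Limsup_lessD[OF order.strict_trans1[OF limE one_less_one_plus_ennreal[OF e2]]] .
    moreover have "eventually (\<lambda>m. dK m < ennreal (e/2)) sequentially"
      using order_tendstoD(2)[OF dK0] e2 by simp
    ultimately have "eventually (\<lambda>m. (\<integral>\<^sup>+\<omega>. E m (\<tau>' \<omega>) \<omega> \<partial>P) < 1 + ennreal (e/2) \<and> dK m < ennreal (e/2)) sequentially"
      by (rule eventually_conj)
    then obtain m where m: "(\<integral>\<^sup>+\<omega>. E m (\<tau>' \<omega>) \<omega> \<partial>P) < 1 + ennreal (e/2)" "dK m < ennreal (e/2)"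
      unfolding eventually_sequentially by blast
    have "(\<integral>\<^sup>+\<omega>. G (\<tau>' \<omega>) \<omega> \<partial>P) \<le> (\<integral>\<^sup>+\<omega>. E m (\<tau>' \<omega>) \<omega> \<partial>P) + dK m" by (rule bound)
    also have "\<dots> \<le> (1 + ennreal (e/2)) + ennreal (e/2)" using m by (intro add_mono) auto
    also have "\<dots> = 1 + ennreal e" using e2 by (simp add: ennreal_plus[symmetric] add.assoc)
    finally show "(\<integral>\<^sup>+\<omega>. G (\<tau>' \<omega>) \<omega> \<partial>P) \<le> 1 + ennreal e" .
  qed
qed


lemma enat_eq_Suc_iff: "(t::enat) = enat (Suc i) \<longleftrightarrow> t \<le> enat (Suc i) \<and> \<not> t \<le> enat i"
  by (cases t) auto

lemma stage1:
  fixes M :: "'a measure" and Ps :: "'a measure set" and F :: "nat \<Rightarrow> nat \<Rightarrow> 'a measure"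
    and E :: "nat \<Rightarrow> nat \<Rightarrow> 'a \<Rightarrow> ennreal" and G :: "nat \<Rightarrow> 'a \<Rightarrow> ennreal" and \<sigma> :: "'a \<Rightarrow> enat"
  assumes probs: "\<forall>P\<in>Ps. prob_space P \<and> sets P = sets M"
    and arr: "filtration_array M F"
    and adaptedE: "\<forall>m n. E m n \<in> borel_measurable (F m n)"
    and adaptedG: "\<forall>n. G n \<in> borel_measurable (F_inf M F n)"
    and conv: "L1_unif_conv Ps E G"
    and asy: "asymptotic_eprocess Ps F r E"
    and rinf: "tends_to_infinity r"
    and P: "P \<in> Ps"
    and sst: "stopping_time (F_inf M F) \<sigma>"
    and bd: "\<forall>\<omega>\<in>space P. \<sigma> \<omega> \<le> enat K"
  shows "(\<integral>\<^sup>+\<omega>. stopped G \<sigma> \<omega> \<partial>P) \<le> 1"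
proof -
  interpret prob_space P using probs P by blast
  have sP: "sets P = sets M" using probs P by blast
  have spP: "space P = space M" using sets_eq_imp_space_eq[OF sP] .
  have subFi: "subalgebra P (F_inf M F n)" for n
    unfolding subalgebra_def using Finf_facts(2,3)[OF arr] sP spP by simp
  have GP[measurable]: "G n \<in> borel_measurable P" for n
    using measurable_from_subalg[OF subFi] adaptedG by blast
  have msm: "\<And>m. sets (F m j) \<subseteq> sets (F (Suc m) j)" for j using arr_facts(4)[OF arr] by blast
  have msn: "\<And>n. sets (F m n) \<subseteq> sets (F m (Suc n))" for m using arr_facts(3)[OF arr] by blast
  have monom: "sets (F a j) \<subseteq> sets (F b j)" if "a \<le> b" for a b j
    using lift_Suc_mono_le[of "\<lambda>m. sets (F m j)", OF msm that] .
  have monon: "sets (F m a) \<subseteq> sets (F m b)" if "a \<le> b" for a b m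
    using lift_Suc_mono_le[of "\<lambda>n. sets (F m n)", OF msn that] .
  define H where "H \<omega> = (\<Sum>j\<le>K. G j \<omega>)" for \<omega>
  have HP[measurable]: "H \<in> borel_measurable P" unfolding H_def by measurable
  have Gint: "(\<integral>\<^sup>+\<omega>. G j \<omega> \<partial>P) < top" for j
    using conv P unfolding L1_unif_conv_def P_integrable_def by auto
  have intH: "(\<integral>\<^sup>+\<omega>. H \<omega> \<partial>P) < top"
  proof -
    have "(\<integral>\<^sup>+\<omega>. H \<omega> \<partial>P) = (\<Sum>j\<le>K. \<integral>\<^sup>+\<omega>. G j \<omega> \<partial>P)" unfolding H_def by (rule nn_integral_sum) simp
    then show ?thesis using Gint by simp
  qed
  define Q where "Q = density P (\<lambda>\<omega>. 1 + H \<omega>)"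
  have sQ: "sets Q = sets M" and spQ: "space Q = space M" unfolding Q_def using sP spP by auto
  have finQ: "finite_measure Q"
  proof (rule finite_measureI)
    have "emeasure Q (space Q) = (\<integral>\<^sup>+\<omega>. (1 + H \<omega>) * indicator (space P) \<omega> \<partial>P)"
      unfolding Q_def by (simp add: emeasure_density)
    also have "\<dots> = (\<integral>\<^sup>+\<omega>. 1 + H \<omega> \<partial>P)" by (rule nn_integral_cong) simp
    also have "\<dots> = 1 + (\<integral>\<^sup>+\<omega>. H \<omega> \<partial>P)" by (subst nn_integral_add) (auto simp: emeasure_space_1)
    finally show "emeasure Q (space Q) \<noteq> \<infinity>" using intH by (simp add: top_unique)
  qed
  define S where "S j = {\<omega>\<in>space M. \<sigma> \<omega> = enat j}" for j
  have sFi: "{\<omega>\<in>space M. \<sigma> \<omega> \<le> enat n} \<in> sets (F_inf M F n)" for n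
  proof -
    have "{\<omega>\<in>space (F_inf M F n). \<sigma> \<omega> \<le> enat n} \<in> sets (F_inf M F n)" using sst unfolding stopping_time_def by simp
    then show ?thesis using Finf_facts(2)[OF arr] by simp
  qed
  have SFi: "S j \<in> sets (F_inf M F j)" for j
  proof (cases j)
    case 0
    have "S j = {\<omega>\<in>space M. \<sigma> \<omega> \<le> enat 0}" unfolding S_def 0 by (auto simp: zero_enat_def[symmetric])
    then show ?thesis using sFi[of 0] 0 by simp
  next
    case (Suc i)
    have "S j = {\<omega>\<in>space M. \<sigma> \<omega> \<le> enat j} - {\<omega>\<in>space M. \<sigma> \<omega> \<le> enat i}"
      unfolding S_def Suc using enat_eq_Suc_iff by blast
    moreover have "{\<omega>\<in>space M. \<sigma> \<omega> \<le> enat i} \<in> sets (F_inf M F j)"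
      using subsetD[OF Finf_facts(5)[OF arr, of i] sFi[of i]] Suc by simp
    ultimately show ?thesis using sFi[of j] by auto
  qed
  have SM: "S j \<in> sets M" for j using subsetD[OF Finf_facts(3)[OF arr] SFi] .
  have apx: "\<forall>\<eta>>0. \<exists>m. \<exists>B\<in>sets (F m j). measure Q (sdiff (S j) B) < \<eta>" for j
  proof (rule approx_sigma[OF finQ])
    show "\<forall>k. sigma_algebra (space Q) (sets (F k j))"
      using sets.sigma_algebra_axioms arr_facts(1)[OF arr] spQ by metis
    show "\<forall>k. sets (F k j) \<subseteq> sets (F (Suc k) j)" using msm by blast
    show "\<forall>k. sets (F k j) \<subseteq> sets Q" using arr_facts(2)[OF arr] sQ by blast
    show "S j \<in> sigma_sets (space Q) (\<Union>k. sets (F k j))" using SFi[of j] Finf_facts(1)[OF arr] spQ by simp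
  qed
  show ?thesis
  proof (rule ennreal_le_epsilon)
    fix \<eta> :: real assume "0 < \<eta>"
    have mono': "\<forall>j m. sets (F m j) \<subseteq> sets (F (Suc m) j)" using msm by blast
    have sub': "\<forall>j m. sets (F m j) \<subseteq> sets Q" using arr_facts(2)[OF arr] sQ by blast
    have As': "\<forall>j\<in>{..K}. S j \<in> sets Q" using SM sQ by blast
    have apx': "\<forall>j\<in>{..K}. \<forall>\<eta>>0. \<exists>m. \<exists>B\<in>sets (F m j). measure Q (sdiff (S j) B) < \<eta>" using apx by blast
    from approx_finite[of "{..K}" "\<lambda>j m. sets (F m j)" Q S \<eta>, OF finite_atMost mono' sub' As' apx' \<open>0 < \<eta>\<close>]
    obtain m0 B where mB: "\<forall>j\<in>{..K}. B j \<in> sets (F m0 j)" "measure Q (\<Union>j\<in>{..K}. sdiff (S j) (B j)) < \<eta>"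
      by blast
    define Bad where "Bad = (\<Union>j\<in>{..K}. sdiff (S j) (B j))"
    have BM: "B j \<in> sets M" if "j \<le> K" for j using mB(1) that arr_facts(2)[OF arr] by blast
    have Bsp: "B j \<subseteq> space M" if "j \<le> K" for j using BM[OF that] sets.sets_into_space by blast
    have BadM: "Bad \<in> sets M"
    proof -
      have "sdiff (S j) (B j) \<in> sets M" if "j \<in> {..K}" for j using SM BM that by (auto simp: sdiff_def)
      then show ?thesis unfolding Bad_def by (intro sets.finite_UN) auto
    qed
    define Qp where "Qp j \<omega> \<longleftrightarrow> K \<le> j \<or> \<omega> \<in> B j" for j \<omega>
    define \<tau>' where "\<tau>' \<omega> = (LEAST j. Qp j \<omega>)" for \<omega>
    have QK: "Qp K \<omega>" for \<omega> unfolding Qp_def by simp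
    have tK: "\<forall>\<omega>. \<tau>' \<omega> \<le> K" unfolding \<tau>'_def using QK by (simp add: Least_le)
    have Qt: "Qp (\<tau>' \<omega>) \<omega>" for \<omega> unfolding \<tau>'_def using QK by (rule LeastI)
    have notQ: "k < \<tau>' \<omega> \<Longrightarrow> \<not> Qp k \<omega>" for k \<omega> unfolding \<tau>'_def by (rule not_less_Least)
    have t_le: "\<tau>' \<omega> \<le> n \<longleftrightarrow> (\<exists>k\<le>n. Qp k \<omega>)" for \<omega> n
      using Qt notQ by (meson not_le order_trans)
    have QpF: "{\<omega>\<in>space M. Qp j \<omega>} \<in> sets (F m n)" if "m0 \<le> m" "j \<le> n" for m n j
    proof (cases "K \<le> j")
      case True
      then have "{\<omega>\<in>space M. Qp j \<omega>} = space (F m n)" unfolding Qp_def using arr_facts(1)[OF arr] by simp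
      then show ?thesis by simp
    next
      case False
      then have "{\<omega>\<in>space M. Qp j \<omega>} = B j" unfolding Qp_def using Bsp[of j] by auto
      moreover have "B j \<in> sets (F m0 j)" using mB(1) False by simp
      ultimately show ?thesis using monom[OF that(1), of j] monon[OF that(2), of m] by auto
    qed
    have tst: "\<forall>m\<ge>m0. \<forall>n. {\<omega>\<in>space M. \<tau>' \<omega> \<le> n} \<in> sets (F m n)"
    proof (intro allI impI)
      fix m n assume "m0 \<le> m"
      have "{\<omega>\<in>space M. \<tau>' \<omega> \<le> n} = (\<Union>j\<in>{..n}. {\<omega>\<in>space M. Qp j \<omega>})" using t_le by auto
      also have "\<dots> \<in> sets (F m n)" using QpF[OF \<open>m0 \<le> m\<close>] by (intro sets.finite_UN) auto
      finally show "{\<omega>\<in>space M. \<tau>' \<omega> \<le> n} \<in> sets (F m n)" .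
    qed
    have inner: "(\<integral>\<^sup>+\<omega>. G (\<tau>' \<omega>) \<omega> \<partial>P) \<le> 1"
      by (rule stage1_inner[OF probs arr adaptedE adaptedG conv asy rinf P tst tK])
    have tP: "\<forall>n. {\<omega>\<in>space P. \<tau>' \<omega> \<le> n} \<in> sets P"
    proof
      fix n
      have "{\<omega>\<in>space M. \<tau>' \<omega> \<le> n} \<in> sets (F m0 n)" using tst by blast
      then have "{\<omega>\<in>space M. \<tau>' \<omega> \<le> n} \<in> sets M" using arr_facts(2)[OF arr] by blast
      then show "{\<omega>\<in>space P. \<tau>' \<omega> \<le> n} \<in> sets P" using sP spP by simp
    qed
    have tmeas: "\<tau>' \<in> measurable P (count_space UNIV)" by (rule nat_pre_meas[OF tP])
    have GtP: "(\<lambda>\<omega>. G (\<tau>' \<omega>) \<omega>) \<in> borel_measurable P"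
      by (rule measurable_compose_countable[OF _ tmeas]) simp
    have BadP: "Bad \<in> sets P" using BadM sP by simp
    have good: "\<sigma> \<omega> = enat (\<tau>' \<omega>)" if w: "\<omega> \<in> space M" and nb: "\<omega> \<notin> Bad" for \<omega>
    proof -
      have b: "\<sigma> \<omega> \<le> enat K" using bd w spP by simp
      obtain s where s: "\<sigma> \<omega> = enat s" "s \<le> K" using b by (cases "\<sigma> \<omega>") auto
      have inS: "\<omega> \<in> S j \<longleftrightarrow> j = s" for j unfolding S_def using s w by auto
      have inB: "\<omega> \<in> B j \<longleftrightarrow> j = s" if "j \<le> K" for j
        using \<open>\<omega> \<notin> Bad\<close> that inS unfolding Bad_def sdiff_def by blast
      have "\<tau>' \<omega> = s" unfolding \<tau>'_def
      proof (rule Least_equality)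
        show "Qp s \<omega>" unfolding Qp_def using inB[of s] s(2) by simp
        fix y assume "Qp y \<omega>"
        then show "s \<le> y" unfolding Qp_def using inB[of y] s(2) by (cases "K \<le> y") auto
      qed
      then show ?thesis using s by simp
    qed
    have pw: "stopped G \<sigma> \<omega> \<le> G (\<tau>' \<omega>) \<omega> + H \<omega> * indicator Bad \<omega>" if w: "\<omega> \<in> space P" for \<omega>
    proof (cases "\<omega> \<in> Bad")
      case False
      then show ?thesis using good[of \<omega>] w spP unfolding stopped_def by simp
    next
      case True
      have b: "\<sigma> \<omega> \<le> enat K" using bd w by simp
      obtain s where s: "\<sigma> \<omega> = enat s" "s \<le> K" using b by (cases "\<sigma> \<omega>") auto
      have "stopped G \<sigma> \<omega> = G s \<omega>" unfolding stopped_def using s by simp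
      also have "\<dots> \<le> H \<omega>" unfolding H_def using s(2) by (intro member_le_sum) auto
      also have "\<dots> = H \<omega> * indicator Bad \<omega>" using True by simp
      also have "\<dots> \<le> G (\<tau>' \<omega>) \<omega> + H \<omega> * indicator Bad \<omega>" by simp
      finally show ?thesis .
    qed
    have i1: "(\<integral>\<^sup>+\<omega>. stopped G \<sigma> \<omega> \<partial>P) \<le> (\<integral>\<^sup>+\<omega>. G (\<tau>' \<omega>) \<omega> + H \<omega> * indicator Bad \<omega> \<partial>P)"
      using pw by (intro nn_integral_mono) auto
    have i2: "(\<integral>\<^sup>+\<omega>. G (\<tau>' \<omega>) \<omega> + H \<omega> * indicator Bad \<omega> \<partial>P) = (\<integral>\<^sup>+\<omega>. G (\<tau>' \<omega>) \<omega> \<partial>P) + (\<integral>\<^sup>+\<omega>. H \<omega> * indicator Bad \<omega> \<partial>P)"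
      using GtP BadP by (intro nn_integral_add) auto
    have i3: "(\<integral>\<^sup>+\<omega>. H \<omega> * indicator Bad \<omega> \<partial>P) \<le> ennreal \<eta>"
    proof -
      have "(\<integral>\<^sup>+\<omega>. H \<omega> * indicator Bad \<omega> \<partial>P) \<le> (\<integral>\<^sup>+\<omega>. (1 + H \<omega>) * indicator Bad \<omega> \<partial>P)"
        by (intro nn_integral_mono) (auto split: split_indicator)
      also have "\<dots> = emeasure Q Bad" unfolding Q_def using BadP by (simp add: emeasure_density)
      also have "\<dots> = ennreal (measure Q Bad)" using finite_measure.emeasure_eq_measure[OF finQ] by simp
      also have "\<dots> \<le> ennreal \<eta>" using mB(2) unfolding Bad_def by (intro ennreal_leI) simp
      finally show ?thesis .
    qed
    have "(\<integral>\<^sup>+\<omega>. stopped G \<sigma> \<omega> \<partial>P) \<le> (\<integral>\<^sup>+\<omega>. G (\<tau>' \<omega>) \<omega> \<partial>P) + (\<integral>\<^sup>+\<omega>. H \<omega> * indicator Bad \<omega> \<partial>P)"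
      using i1 unfolding i2 .
    also have "\<dots> \<le> 1 + ennreal \<eta>" using inner i3 by (rule add_mono)
    finally show "(\<integral>\<^sup>+\<omega>. stopped G \<sigma> \<omega> \<partial>P) \<le> 1 + ennreal \<eta>" .
  qed
qed


theorem mainTheorem5:
  fixes M :: "'a measure"
    and Ps :: "'a measure set"
    and F :: "nat \<Rightarrow> nat \<Rightarrow> 'a measure"
    and E :: "nat \<Rightarrow> nat \<Rightarrow> 'a \<Rightarrow> ennreal"
    and G :: "nat \<Rightarrow> 'a \<Rightarrow> ennreal"
  assumes probs: "\<forall>P\<in>Ps. prob_space P \<and> sets P = sets M"
    and arr: "filtration_array M F"
    and adaptedE: "\<forall>m n. E m n \<in> borel_measurable (F m n)"
    and adaptedG: "\<forall>n. G n \<in> borel_measurable (F_inf M F n)"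
    and conv: "L1_unif_conv Ps E G"
  shows "((\<exists>r. tends_to_infinity r \<and> asymptotic_eprocess Ps F r E)
            \<longleftrightarrow> eprocess Ps (F_inf M F) G)
       \<and> (eprocess Ps (F_inf M F) G \<longrightarrow>
            (\<forall>r. sum_condition Ps E G r \<longrightarrow> asymptotic_eprocess Ps F r E)
          \<and> (\<exists>r. tends_to_infinity r \<and> sum_condition Ps E G r))"
proof -
  have C: "\<exists>r. tends_to_infinity r \<and> sum_condition Ps E G r"
  proof -
    have "\<forall>n. (\<lambda>m. L1_dist_sup Ps (E m n) (G n)) \<longlonglongrightarrow> 0" using conv unfolding L1_unif_conv_def by simp
    from partC[OF this] show ?thesis unfolding sum_condition_def .
  qed
  have B: "\<forall>r. sum_condition Ps E G r \<longrightarrow> asymptotic_eprocess Ps F r E" if ep: "eprocess Ps (F_inf M F) G"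
    using partB[OF probs arr adaptedE adaptedG ep] by blast
  have A: "eprocess Ps (F_inf M F) G" if ex: "\<exists>r. tends_to_infinity r \<and> asymptotic_eprocess Ps F r E"
  proof -
    obtain r where rinf: "tends_to_infinity r" and asy: "asymptotic_eprocess Ps F r E" using ex by blast
    have "\<forall>P\<in>Ps. (\<integral>\<^sup>+\<omega>. stopped G \<tau> \<omega> \<partial>P) \<le> 1" if tau: "stopping_time (F_inf M F) \<tau>" for \<tau>
    proof
      fix P assume P: "P \<in> Ps"
      have prob: "prob_space P" and sP: "sets P = sets M" using probs P by auto
      have spP: "space P = space M" using sets_eq_imp_space_eq[OF sP] .
      show "(\<integral>\<^sup>+\<omega>. stopped G \<tau> \<omega> \<partial>P) \<le> 1"
      proof (rule stage2[OF prob _ _ _ _ _ tau])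
        show "\<forall>n. space (F_inf M F n) = space P" using Finf_facts(2)[OF arr] spP by simp
        show "\<forall>n. sets (F_inf M F n) \<subseteq> sets (F_inf M F (Suc n))" using Finf_facts(5)[OF arr] by blast
        show "\<forall>n. sets (F_inf M F n) \<subseteq> sets P" using Finf_facts(3)[OF arr] sP by blast
        show "\<forall>n. G n \<in> borel_measurable (F_inf M F n)" by (rule adaptedG)
        show "\<forall>\<sigma> K. stopping_time (F_inf M F) \<sigma> \<longrightarrow> (\<forall>\<omega>\<in>space P. \<sigma> \<omega> \<le> enat K) \<longrightarrow> (\<integral>\<^sup>+\<omega>. stopped G \<sigma> \<omega> \<partial>P) \<le> 1"
          using stage1[OF probs arr adaptedE adaptedG conv asy rinf P] by blast
      qed
    qed
    then show ?thesis unfolding eprocess_def using adaptedG by blast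
  qed
  have BA: "\<exists>r. tends_to_infinity r \<and> asymptotic_eprocess Ps F r E" if ep: "eprocess Ps (F_inf M F) G"
    using C B[OF ep] by blast
  show ?thesis using A BA B C by blast
qed

end
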